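(* Let $T\in\mathcal{K}(V)$ with $\rho_S(T)\neq\emptyset$. For every intrinsic polynomial $P$, the operator $P(T)$ is closed.
   Context: Standing setting: either (a) $\mathbb{F}_0=\mathbb{F}=\mathbb{H}$, $V$ a two-sided quaternionic Banach space, $\mathcal{K}(V)$ the closed right linear operators on $V$ (defined on right subspaces); or (b) $\mathbb{F}=\mathbb{R}_n$ the real Clifford algebra generated by $e_1,\dots,e_n$, $\mathbb{F}_0=\mathbb{R}^{n+1}$ the paravectors $x_0+\sum x_ie_i$, $V=V_{\mathbb{R}}\otimes\mathbb{R}_n$ for a real Banach space $V_{\mathbb{R}}$, $\mathcal{K}(V)$ the operators of paravector type $T=T_0+\sum_{i=1}^nT_ie_i$ with closed $T_i$ on $V_{\mathbb{R}}$, defined on $\bigcap_i\operatorname{dom}(T_i)$. $\mathcal{B}(V)$ denotes the bounded everywhere defined such operators, $\mathcal{I}$ the identity; powers $T^k$ have the usual domains. For $s\in\mathbb{F}_0$, $\mathcal{Q}_s(T)=T^2-2\Re(s)T+|s|^2\mathcal{I}$ on $\operatorname{dom}(T^2)$, and $\rho_S(T)=\{s\in\mathbb{F}_0:\mathcal{Q}_s(T)^{-1}\in\mathcal{B}(V)\}$. An intrinsic polynomial is $P(s)=\sum_{k=0}^ma_ks^k$ with $a_k\in\mathbb{R}$, and $P(T)v:=\sum_{k=0}^ma_kT^kv$ for $v\in\operatorname{dom}(T^m)$. *)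

theory Defs
  imports "HOL-Analysis.Analysis" "HOL-Computational_Algebra.Polynomial"
    "HOL-Library.Function_Algebras"
begin

text \<open>Pointwise real vector space structure on functions (used for V = V_R \<otimes> R_n,
  represented by coefficient functions).\<close>
instantiation "fun" :: (type, real_vector) real_vector
begin
definition scaleR_fun_def: "scaleR r f = (\<lambda>x. scaleR r (f x))"
instance by standard (auto simp: scaleR_fun_def fun_eq_iff scaleR_add_right scaleR_add_left)
end

text \<open>An operator on a carrier is a pair (domain, action). Only the values on the
  domain matter.\<close>
type_synonym 'v op = "'v set \<times> ('v \<Rightarrow> 'v)"

definition op_dom :: "'v op \<Rightarrow> 'v set" where "op_dom T = fst T"
definition op_app :: "'v op \<Rightarrow> 'v \<Rightarrow> 'v" where "op_app T = snd T"

definition op_closed :: "('v::topological_space) op \<Rightarrow> bool" where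
  "op_closed T \<longleftrightarrow> closed {(x, op_app T x) | x. x \<in> op_dom T}"

fun op_pow :: "'v set \<Rightarrow> 'v op \<Rightarrow> nat \<Rightarrow> 'v op" where
  "op_pow Vc T 0 = (Vc, (\<lambda>v. v))"
| "op_pow Vc T (Suc k) =
     ({v \<in> op_dom (op_pow Vc T k). op_app (op_pow Vc T k) v \<in> op_dom T},
      (\<lambda>v. op_app T (op_app (op_pow Vc T k) v)))"

text \<open>Q_s(T) = T^2 - 2 Re(s) T + |s|^2 I on dom(T^2); it depends on s only through
  re = Re(s) and nsq = |s|^2.\<close>
definition op_Q :: "'v set \<Rightarrow> ('v::real_vector) op \<Rightarrow> real \<Rightarrow> real \<Rightarrow> 'v op" where
  "op_Q Vc T re nsq = (op_dom (op_pow Vc T 2),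
     (\<lambda>v. op_app (op_pow Vc T 2) v - (2 * re) *\<^sub>R op_app T v + nsq *\<^sub>R v))"

text \<open>Intrinsic polynomial P (real coefficients) applied to T:
  P(T) v = sum_{k=0}^m a_k T^k v on dom(T^m), m = degree P.\<close>
definition op_poly :: "'v set \<Rightarrow> ('v::real_vector) op \<Rightarrow> real poly \<Rightarrow> 'v op" where
  "op_poly Vc T p = (op_dom (op_pow Vc T (degree p)),
     (\<lambda>v. \<Sum>k\<le>degree p. coeff p k *\<^sub>R op_app (op_pow Vc T k) v))"

text \<open>"Q^{-1} exists and lies in the class Bset of bounded everywhere defined operators
  (everywhere = on the carrier Vc)": some S in Bset is a two-sided inverse of Q.\<close>
definition inv_in :: "'v set \<Rightarrow> 'v op \<Rightarrow> ('v \<Rightarrow> 'v) set \<Rightarrow> bool" where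
  "inv_in Vc Q Bset \<longleftrightarrow> op_dom Q \<subseteq> Vc \<and>
     (\<exists>S\<in>Bset. (\<forall>v\<in>Vc. S v \<in> op_dom Q \<and> op_app Q (S v) = v) \<and>
                (\<forall>u\<in>op_dom Q. S (op_app Q u) = u))"

datatype quat = Quat real real real real

fun qadd :: "quat \<Rightarrow> quat \<Rightarrow> quat" where
  "qadd (Quat a b c d) (Quat a' b' c' d') = Quat (a+a') (b+b') (c+c') (d+d')"

text \<open>Hamilton product (i^2 = j^2 = k^2 = ijk = -1).\<close>
fun qmul :: "quat \<Rightarrow> quat \<Rightarrow> quat" where
  "qmul (Quat a b c d) (Quat a' b' c' d') =
     Quat (a*a' - b*b' - c*c' - d*d')
          (a*b' + b*a' + c*d' - d*c')
          (a*c' - b*d' + c*a' + d*b')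
          (a*d' + b*c' - c*b' + d*a')"

definition qreal :: "real \<Rightarrow> quat" where "qreal r = Quat r 0 0 0"

fun qRe :: "quat \<Rightarrow> real" where "qRe (Quat a b c d) = a"

fun qabs :: "quat \<Rightarrow> real" where
  "qabs (Quat a b c d) = sqrt (a\<^sup>2 + b\<^sup>2 + c\<^sup>2 + d\<^sup>2)"

definition two_sided_qbanach :: "(quat \<Rightarrow> 'v::banach \<Rightarrow> 'v) \<Rightarrow> ('v \<Rightarrow> quat \<Rightarrow> 'v) \<Rightarrow> bool" where
  "two_sided_qbanach L R \<longleftrightarrow>
     (\<forall>r v. L (qreal r) v = r *\<^sub>R v \<and> R v (qreal r) = r *\<^sub>R v) \<and>
     (\<forall>a b v. L (qadd a b) v = L a v + L b v \<and> R v (qadd a b) = R v a + R v b) \<and>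
     (\<forall>a v w. L a (v + w) = L a v + L a w \<and> R (v + w) a = R v a + R w a) \<and>
     (\<forall>a b v. L (qmul a b) v = L a (L b v) \<and> R v (qmul a b) = R (R v a) b) \<and>
     (\<forall>a b v. L a (R v b) = R (L a v) b) \<and>
     (\<forall>a v. norm (L a v) = qabs a * norm v \<and> norm (R v a) = qabs a * norm v)"

definition qK :: "('v::banach \<Rightarrow> quat \<Rightarrow> 'v) \<Rightarrow> 'v op \<Rightarrow> bool" where
  "qK R T \<longleftrightarrow>
     0 \<in> op_dom T \<and>
     (\<forall>u\<in>op_dom T. \<forall>w\<in>op_dom T. u + w \<in> op_dom T) \<and>
     (\<forall>u\<in>op_dom T. \<forall>a. R u a \<in> op_dom T) \<and>
     (\<forall>u\<in>op_dom T. \<forall>w\<in>op_dom T. \<forall>a.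
         op_app T (R u a + w) = R (op_app T u) a + op_app T w) \<and>
     op_closed T"

definition qB :: "('v::banach \<Rightarrow> quat \<Rightarrow> 'v) \<Rightarrow> ('v \<Rightarrow> 'v) set" where
  "qB R = {S. bounded_linear S \<and> (\<forall>v a. S (R v a) = R (S v) a)}"

definition q_rhoS :: "('v::banach \<Rightarrow> quat \<Rightarrow> 'v) \<Rightarrow> 'v op \<Rightarrow> quat set" where
  "q_rhoS R T = {s. inv_in UNIV (op_Q UNIV T (qRe s) ((qabs s)\<^sup>2)) (qB R)}"

text \<open>An element of V = V_R \<otimes> R_n is represented by its coefficient function
  A \<mapsto> v_A over the multi-indices A \<subseteq> {1..n} (basis elements e_A = e_a1 ... e_ak,
  a1 < ... < ak), vanishing outside; topology: product topology (= norm topology,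
  since only finitely many coefficients are nonzero).\<close>
definition cliff_V :: "nat \<Rightarrow> (nat set \<Rightarrow> 'w::real_normed_vector) set" where
  "cliff_V n = {v. \<forall>A. \<not> A \<subseteq> {1..n} \<longrightarrow> v A = 0}"

text \<open>e_i e_{B sym-diff {i}} = cliff_sign i B e_B for 1 \<le> i \<le> n.\<close>
definition cliff_sign :: "nat \<Rightarrow> nat set \<Rightarrow> real" where
  "cliff_sign i B = (-1) ^ card {j\<in>B. j < i} * (if i \<in> B then 1 else -1)"

text \<open>Action of T = T_0 + sum_i T_i e_i on v = sum_A v_A e_A:
  T v = sum_i sum_A T_i(v_A) e_i e_A (left multiplication, so T is right linear).\<close>
definition cliff_act :: "nat \<Rightarrow> (nat \<Rightarrow> 'w \<Rightarrow> 'w) \<Rightarrow> (nat set \<Rightarrow> 'w::real_normed_vector) \<Rightarrow> (nat set \<Rightarrow> 'w)" where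
  "cliff_act n f v = (\<lambda>B. if B \<subseteq> {1..n} then
       f 0 (v B) + (\<Sum>i\<in>{1..n}. cliff_sign i B *\<^sub>R f i (v (if i \<in> B then B - {i} else insert i B)))
     else 0)"

definition real_closed_op :: "('w::real_normed_vector) op \<Rightarrow> bool" where
  "real_closed_op T \<longleftrightarrow> subspace (op_dom T) \<and>
     (\<forall>x\<in>op_dom T. \<forall>y\<in>op_dom T. \<forall>c. op_app T (c *\<^sub>R x + y) = c *\<^sub>R op_app T x + op_app T y) \<and>
     op_closed T"

definition para_op :: "nat \<Rightarrow> (nat \<Rightarrow> ('w::real_normed_vector) op) \<Rightarrow> (nat set \<Rightarrow> 'w) op" where
  "para_op n Ts = ({v \<in> cliff_V n. \<forall>A. \<forall>i\<le>n. v A \<in> op_dom (Ts i)},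
                   cliff_act n (\<lambda>i. op_app (Ts i)))"

definition cK :: "nat \<Rightarrow> (nat set \<Rightarrow> 'w::real_normed_vector) op \<Rightarrow> bool" where
  "cK n T \<longleftrightarrow> (\<exists>Ts. (\<forall>i\<le>n. real_closed_op (Ts i)) \<and> T = para_op n Ts)"

definition cB :: "nat \<Rightarrow> ((nat set \<Rightarrow> 'w::real_normed_vector) \<Rightarrow> (nat set \<Rightarrow> 'w)) set" where
  "cB n = {S. \<exists>Ss. (\<forall>i\<le>n. bounded_linear (Ss i)) \<and>
                   (\<forall>v\<in>cliff_V n. S v = cliff_act n Ss v)}"

text \<open>S-resolvent set; a paravector s = s_0 + sum_{i=1}^n s_i e_i is given by its
  coefficients s 0, ..., s n; Re(s) = s_0 and |s|^2 = sum_{i=0}^n s_i^2.\<close>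
definition c_rhoS :: "nat \<Rightarrow> (nat set \<Rightarrow> 'w::real_normed_vector) op \<Rightarrow> (nat \<Rightarrow> real) set" where
  "c_rhoS n T = {s. (\<forall>i>n. s i = 0) \<and>
      inv_in (cliff_V n) (op_Q (cliff_V n) T (s 0) (\<Sum>i\<le>n. (s i)\<^sup>2)) (cB n)}"

end

theory Submission
  imports Defs
begin


lemma closed_graph_bounded:
  fixes f :: "'a::banach \<Rightarrow> 'b::banach"
  assumes add: "\<And>x y. f (x + y) = f x + f y" and sc: "\<And>c x. f (c *\<^sub>R x) = c *\<^sub>R f x"
  and cl: "\<And>xs x y. xs \<longlonglongrightarrow> x \<Longrightarrow> (\<lambda>j. f (xs j)) \<longlonglongrightarrow> y \<Longrightarrow> f x = y"
  shows "bounded_linear f"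
proof -
  have lin: "linear f" using add sc by (simp add: linearI)
  define F where "F k = closure {x. norm (f x) \<le> real k}" for k :: nat
  have "\<exists>k. interior (F k) \<noteq> {}"
  proof (rule ccontr)
    assume "\<not> ?thesis"
    hence "euclidean interior_of \<Union>(range F) = {}"
      by (intro Baire_category_alt) (auto simp: completely_metrizable_space_euclidean F_def)
    moreover have "\<Union>(range F) = UNIV"
    proof -
      have "x \<in> F (nat \<lceil>norm (f x)\<rceil>)" for x
        unfolding F_def by (rule closure_subset[THEN subsetD]) (simp add: real_nat_ceiling_ge)
      thus ?thesis by blast
    qed
    ultimately show False by simp
  qed
  then obtain k x0 r where r: "r > 0" and ball: "ball x0 r \<subseteq> F k"
    by (metis equals0I open_contains_ball open_interior interior_subset subset_trans)
  have x0F: "x0 \<in> F k" using ball r by auto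
  have approx0: "\<exists>w. norm (z - w) < e \<and> norm (f w) \<le> 2 * real k" if "norm z < r" "e > 0" for z e
  proof -
    have "x0 + z \<in> F k" using ball that by (auto simp: dist_norm)
    then obtain a where a: "norm (f a) \<le> real k" "dist a (x0 + z) < e/2"
      unfolding F_def closure_approachable using \<open>e>0\<close> by (metis half_gt_zero mem_Collect_eq)
    obtain b where b: "norm (f b) \<le> real k" "dist b x0 < e/2"
      using x0F unfolding F_def closure_approachable using \<open>e>0\<close> by (metis half_gt_zero mem_Collect_eq)
    have "f (a - b) = f a - f b" using lin by (simp add: linear_diff)
    hence "norm (f (a - b)) \<le> 2 * real k" using a b norm_triangle_ineq4[of "f a" "f b"] by simp
    moreover have "norm (z - (a - b)) < e"
    proof -
      have "z - (a - b) = (x0 + z - a) + (b - x0)" by (simp add: algebra_simps)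
      hence "norm (z - (a - b)) \<le> norm (x0 + z - a) + norm (b - x0)" by (metis norm_triangle_ineq)
      also have "\<dots> < e" using a b by (simp add: dist_norm norm_minus_commute)
      finally show ?thesis .
    qed
    ultimately show ?thesis by blast
  qed
  define M where "M = 4 * real k / r"
  have Mge: "M \<ge> 0" using r by (simp add: M_def)
  have approx: "\<exists>w. norm (z - w) < e \<and> norm (f w) \<le> M * norm z" if "e > 0" for z e
  proof (cases "z = 0")
    case True thus ?thesis using that lin by (auto intro!: exI[of _ 0] simp: linear_0)
  next
    case False
    define c where "c = r / (2 * norm z)"
    have c: "c > 0" using False r by (simp add: c_def)
    have "norm (c *\<^sub>R z) < r" using False r by (simp add: c_def)
    then obtain w where w: "norm (c *\<^sub>R z - w) < c * e" "norm (f w) \<le> 2 * real k"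
      using approx0 c \<open>e>0\<close> by (meson mult_pos_pos)
    have "norm (z - (1/c) *\<^sub>R w) = norm ((1/c) *\<^sub>R (c *\<^sub>R z - w))"
      using c by (simp add: algebra_simps)
    also have "\<dots> = (1/c) * norm (c *\<^sub>R z - w)" using c by simp
    also have "\<dots> < (1/c) * (c * e)" using c w(1) by (intro mult_strict_left_mono) auto
    also have "\<dots> = e" using c by simp
    finally have 1: "norm (z - (1/c) *\<^sub>R w) < e" .
    have "norm (f ((1/c) *\<^sub>R w)) = (1/c) * norm (f w)" using c sc by simp
    also have "\<dots> \<le> (1/c) * (2 * real k)" using c w(2) by (intro mult_left_mono) auto
    also have "\<dots> = M * norm z" using False r by (simp add: c_def M_def field_simps)
    finally show ?thesis using 1 by blast
  qed
  have step: "\<exists>w. norm (z - w) \<le> norm z / 2 \<and> norm (f w) \<le> M * norm z" for z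
  proof (cases "z = 0")
    case True thus ?thesis using lin by (auto intro!: exI[of _ 0] simp: linear_0)
  next
    case False thus ?thesis using approx[of "norm z / 2" z] by (auto intro: less_imp_le)
  qed
  then obtain W where W: "\<And>z. norm (z - W z) \<le> norm z / 2" "\<And>z. norm (f (W z)) \<le> M * norm z"
    by metis
  have bound: "norm (f x) \<le> 2 * M * norm x" for x
  proof -
    define e where "e j = ((\<lambda>z. z - W z) ^^ j) x" for j
    have e_suc: "e (Suc j) = e j - W (e j)" for j by (simp add: e_def)
    have e_bound: "norm (e j) \<le> norm x / 2 ^ j" for j
    proof (induction j)
      case 0 thus ?case by (simp add: e_def)
    next
      case (Suc j)
      have "norm (e (Suc j)) \<le> norm (e j) / 2" using W(1) by (simp add: e_suc)
      also have "\<dots> \<le> norm x / 2 ^ Suc j" using Suc by (simp add: field_simps)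
      finally show ?case .
    qed
    have psum: "(\<Sum>j<N. W (e j)) = x - e N" for N
      by (induction N) (auto simp: e_def[of 0] e_suc algebra_simps)
    have fb: "norm (f (W (e j))) \<le> M * norm x * (1/2) ^ j" for j
    proof -
      have "norm (f (W (e j))) \<le> M * norm (e j)" by (rule W(2))
      also have "\<dots> \<le> M * (norm x / 2 ^ j)" using e_bound Mge by (intro mult_left_mono) auto
      finally show ?thesis by (simp add: power_divide)
    qed
    have gs: "summable (\<lambda>j. M * norm x * (1/2::real) ^ j)"
      by (intro summable_mult summable_geometric) auto
    have sn: "summable (\<lambda>j. norm (f (W (e j))))"
      by (rule summable_comparison_test[OF _ gs]) (use fb in auto)
    hence s: "summable (\<lambda>j. f (W (e j)))" by (rule summable_norm_cancel)
    have "e \<longlonglongrightarrow> 0"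
    proof (rule tendsto_norm_zero_cancel, rule Lim_null_comparison)
      show "\<forall>\<^sub>F j in sequentially. norm (norm (e j)) \<le> norm x * (1/2) ^ j"
        using e_bound by (simp add: power_divide)
      show "(\<lambda>j. norm x * (1/2::real) ^ j) \<longlonglongrightarrow> 0"
        by (intro tendsto_mult_right_zero LIMSEQ_power_zero) auto
    qed
    hence "(\<lambda>N. x - e N) \<longlonglongrightarrow> x - 0" by (intro tendsto_diff tendsto_const)
    hence xs: "(\<lambda>N. \<Sum>j<N. W (e j)) \<longlonglongrightarrow> x" by (simp add: psum)
    have fs: "(\<lambda>N. f (\<Sum>j<N. W (e j))) \<longlonglongrightarrow> (\<Sum>j. f (W (e j)))"
      using summable_LIMSEQ[OF s] by (simp add: linear_sum[OF lin])
    have "f x = (\<Sum>j. f (W (e j)))" by (rule cl[OF xs fs])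
    hence "norm (f x) \<le> (\<Sum>j. norm (f (W (e j))))" using summable_norm[OF sn] by simp
    also have "\<dots> \<le> (\<Sum>j. M * norm x * (1/2) ^ j)"
      by (rule suminf_le[OF _ sn gs]) (use fb in auto)
    also have "\<dots> = 2 * M * norm x"
      using suminf_geometric[of "1/2::real"] by (simp add: suminf_mult)
    finally show ?thesis .
  qed
  show ?thesis
    by (rule bounded_linear_intro[of f "2 * M"]) (use add sc bound in \<open>auto simp: mult.commute\<close>)
qed



lemma op_pow_dom_Suc: "op_dom (op_pow Vc T (Suc k)) = {v \<in> op_dom (op_pow Vc T k). op_app (op_pow Vc T k) v \<in> op_dom T}"
  by (simp add: op_dom_def)
lemma op_pow_app_Suc: "op_app (op_pow Vc T (Suc k)) v = op_app T (op_app (op_pow Vc T k) v)"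
  by (simp add: op_app_def)
lemma op_pow_dom_0: "op_dom (op_pow Vc T 0) = Vc" by (simp add: op_dom_def)
lemma op_pow_app_0: "op_app (op_pow Vc T 0) v = v" by (simp add: op_app_def)
declare op_pow.simps[simp del]
lemma op_app_pair[simp]: "op_app (a, b) = b" by (simp add: op_app_def)
lemma op_dom_pair[simp]: "op_dom (a, b) = a" by (simp add: op_dom_def)

locale core =
  fixes Vc :: "'a::{real_vector,topological_space} set" and T :: "'a op"
    and S :: "'a \<Rightarrow> 'a" and re nsq :: real
  assumes Vc0: "0 \<in> Vc"
    and Vc_lin: "\<And>x y a. x \<in> Vc \<Longrightarrow> y \<in> Vc \<Longrightarrow> a *\<^sub>R x + y \<in> Vc"
    and dom_Vc: "\<And>x. x \<in> op_dom T \<Longrightarrow> x \<in> Vc"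
    and dom0: "0 \<in> op_dom T"
    and dom_lin: "\<And>x y a. x \<in> op_dom T \<Longrightarrow> y \<in> op_dom T \<Longrightarrow> a *\<^sub>R x + y \<in> op_dom T"
    and T_lin: "\<And>x y a. x \<in> op_dom T \<Longrightarrow> y \<in> op_dom T \<Longrightarrow>
        op_app T (a *\<^sub>R x + y) = a *\<^sub>R op_app T x + op_app T y"
    and T_Vc: "\<And>x. x \<in> op_dom T \<Longrightarrow> op_app T x \<in> Vc"
    and S_D2: "\<And>v. v \<in> Vc \<Longrightarrow> S v \<in> op_dom (op_pow Vc T 2)"
    and S_right: "\<And>v. v \<in> Vc \<Longrightarrow> op_app (op_Q Vc T re nsq) (S v) = v"
    and S_left: "\<And>u. u \<in> op_dom (op_pow Vc T 2) \<Longrightarrow> S (op_app (op_Q Vc T re nsq) u) = u"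
    and S_cont: "\<And>xs x. (\<And>j. xs j \<in> Vc) \<Longrightarrow> xs \<longlonglongrightarrow> x \<Longrightarrow> x \<in> Vc \<Longrightarrow> (\<lambda>j. S (xs j)) \<longlonglongrightarrow> S x"
    and TS_cont: "\<And>xs x. (\<And>j. xs j \<in> Vc) \<Longrightarrow> xs \<longlonglongrightarrow> x \<Longrightarrow> x \<in> Vc \<Longrightarrow>
        (\<lambda>j. op_app T (S (xs j))) \<longlonglongrightarrow> op_app T (S x)"
    and Vc_closed: "\<And>xs x. (\<And>j. xs j \<in> Vc) \<Longrightarrow> xs \<longlonglongrightarrow> x \<Longrightarrow> x \<in> Vc"
    and lim_add: "\<And>f g (a :: 'a) b. f \<longlonglongrightarrow> a \<Longrightarrow> g \<longlonglongrightarrow> b \<Longrightarrow> (\<lambda>j. f j + g j) \<longlonglongrightarrow> a + b"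
    and lim_scale: "\<And>f (a :: 'a) c. f \<longlonglongrightarrow> a \<Longrightarrow> (\<lambda>j. c *\<^sub>R f j) \<longlonglongrightarrow> c *\<^sub>R a"
    and lim_unique: "\<And>f (a :: 'a) b. f \<longlonglongrightarrow> a \<Longrightarrow> f \<longlonglongrightarrow> b \<Longrightarrow> a = b"
begin

abbreviation "dT \<equiv> op_dom T"
abbreviation "aT \<equiv> op_app T"
abbreviation "D k \<equiv> op_dom (op_pow Vc T k)"
abbreviation "Tk k \<equiv> op_app (op_pow Vc T k)"
abbreviation "Qf \<equiv> op_app (op_Q Vc T re nsq)"

lemma Qf_eq: "Qf u = aT (aT u) - (2 * re) *\<^sub>R aT u + nsq *\<^sub>R u"
  by (simp add: op_Q_def numeral_2_eq_2 op_pow_app_Suc op_pow_app_0)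

lemma D2_iff: "u \<in> D 2 \<longleftrightarrow> u \<in> dT \<and> aT u \<in> dT"
  using dom_Vc by (auto simp: numeral_2_eq_2 op_pow_app_Suc op_pow_app_0 op_pow_dom_Suc op_pow_dom_0)

lemma Vc_scale: "x \<in> Vc \<Longrightarrow> a *\<^sub>R x \<in> Vc" using Vc_lin[of x 0 a] Vc0 by simp
lemma Vc_add: "x \<in> Vc \<Longrightarrow> y \<in> Vc \<Longrightarrow> x + y \<in> Vc" using Vc_lin[of x y 1] by simp
lemma Vc_diff: "x \<in> Vc \<Longrightarrow> y \<in> Vc \<Longrightarrow> x - y \<in> Vc" using Vc_lin[of y x "-1"] by (simp add: add.commute)
lemma dom_scale: "x \<in> dT \<Longrightarrow> a *\<^sub>R x \<in> dT" using dom_lin[of x 0 a] dom0 by simp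
lemma dom_add: "x \<in> dT \<Longrightarrow> y \<in> dT \<Longrightarrow> x + y \<in> dT" using dom_lin[of x y 1] by simp
lemma dom_diff: "x \<in> dT \<Longrightarrow> y \<in> dT \<Longrightarrow> x - y \<in> dT" using dom_lin[of y x "-1"] by (simp add: add.commute)
lemma T0: "aT 0 = 0" using T_lin[of 0 0 1] dom0 by simp
lemma T_scale: "x \<in> dT \<Longrightarrow> aT (a *\<^sub>R x) = a *\<^sub>R aT x" using T_lin[of x 0 a] dom0 T0 by simp
lemma T_add: "x \<in> dT \<Longrightarrow> y \<in> dT \<Longrightarrow> aT (x + y) = aT x + aT y" using T_lin[of x y 1] by simp
lemma T_diff: "x \<in> dT \<Longrightarrow> y \<in> dT \<Longrightarrow> aT (x - y) = aT x - aT y"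
  using T_lin[of y x "-1"] by (simp add: add.commute)

lemma D_sub: "x \<in> D k \<Longrightarrow> x \<in> Vc"
  by (induction k) (simp_all add: op_pow_dom_Suc op_pow_dom_0)

lemma Tk_Suc_gen: "Tk (Suc k) x = Tk k (aT x)"
  by (induction k arbitrary: x) (simp_all only: op_pow_app_Suc op_pow_app_0)

lemma D_Suc_iff: "x \<in> D (Suc k) \<longleftrightarrow> x \<in> dT \<and> aT x \<in> D k"
proof (induction k arbitrary: x)
  case 0
  show ?case using dom_Vc T_Vc by (auto simp only: op_pow_dom_Suc op_pow_dom_0 op_pow_app_0 mem_Collect_eq)
next
  case (Suc k)
  have "x \<in> D (Suc (Suc k)) \<longleftrightarrow> x \<in> D (Suc k) \<and> Tk (Suc k) x \<in> dT"
    by (simp only: op_pow_dom_Suc[of Vc T "Suc k"] mem_Collect_eq)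
  also have "\<dots> \<longleftrightarrow> x \<in> dT \<and> aT x \<in> D k \<and> Tk k (aT x) \<in> dT"
    using Suc.IH Tk_Suc_gen by simp
  also have "\<dots> \<longleftrightarrow> x \<in> dT \<and> aT x \<in> D (Suc k)"
    by (simp only: op_pow_dom_Suc[of Vc T k] mem_Collect_eq)
  finally show ?case .
qed

lemma Tk_Suc': "x \<in> D (Suc k) \<Longrightarrow> Tk (Suc k) x = Tk k (aT x)"
  by (rule Tk_Suc_gen)

lemma D_mono: "k \<le> l \<Longrightarrow> x \<in> D l \<Longrightarrow> x \<in> D k"
proof (induction l)
  case 0 thus ?case by simp
next
  case (Suc l)
  show ?case
  proof (cases "k = Suc l")
    case True thus ?thesis using Suc by simp
  next
    case False
    hence "k \<le> l" using Suc by simp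
    moreover have "x \<in> D l" using Suc.prems(2) by (simp add: op_pow_dom_Suc)
    ultimately show ?thesis using Suc.IH by blast
  qed
qed

lemma Tk_D: "x \<in> D (k + l) \<Longrightarrow> Tk k x \<in> D l"
proof (induction k arbitrary: x)
  case 0 thus ?case by (simp add: op_pow_app_0)
next
  case (Suc k)
  hence "x \<in> D (Suc (k + l))" by simp
  hence a: "aT x \<in> D (k + l)" using D_Suc_iff by blast
  have "x \<in> D (Suc k)" using D_mono[of "Suc k" "Suc (k+l)" x] \<open>x \<in> D (Suc (k + l))\<close> by simp
  hence "Tk (Suc k) x = Tk k (aT x)" by (rule Tk_Suc')
  thus ?case using Suc.IH[OF a] by simp
qed

lemma Tk_Vc: "x \<in> D k \<Longrightarrow> Tk k x \<in> Vc"
  using Tk_D[of x k 0] by (simp add: op_pow_dom_0)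

lemma D_lin: "x \<in> D k \<Longrightarrow> y \<in> D k \<Longrightarrow> a *\<^sub>R x + y \<in> D k \<and> Tk k (a *\<^sub>R x + y) = a *\<^sub>R Tk k x + Tk k y"
  by (induction k) (auto simp: op_pow_dom_Suc op_pow_dom_0 op_pow_app_Suc op_pow_app_0 Vc_lin dom_lin T_lin)

lemma D0: "0 \<in> D k \<and> Tk k 0 = 0"
  by (induction k) (auto simp: op_pow_dom_Suc op_pow_dom_0 op_pow_app_Suc op_pow_app_0 Vc0 dom0 T0)

lemma D_sum: "finite I \<Longrightarrow> (\<And>i. i \<in> I \<Longrightarrow> x i \<in> D k) \<Longrightarrow>
   (\<Sum>i\<in>I. c i *\<^sub>R x i) \<in> D k \<and> Tk k (\<Sum>i\<in>I. c i *\<^sub>R x i) = (\<Sum>i\<in>I. c i *\<^sub>R Tk k (x i))"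
proof (induction I rule: finite_induct)
  case empty thus ?case using D0 by simp
next
  case (insert i I)
  thus ?case using D_lin[of "x i" k "\<Sum>i\<in>I. c i *\<^sub>R x i" "c i"] by simp
qed

lemma dom_sum: "finite I \<Longrightarrow> (\<And>i. i \<in> I \<Longrightarrow> x i \<in> dT) \<Longrightarrow>
   (\<Sum>i\<in>I. c i *\<^sub>R x i) \<in> dT \<and> aT (\<Sum>i\<in>I. c i *\<^sub>R x i) = (\<Sum>i\<in>I. c i *\<^sub>R aT (x i))"
proof (induction I rule: finite_induct)
  case empty thus ?case using dom0 T0 by simp
next
  case (insert i I)
  thus ?case using dom_lin[of "x i" "\<Sum>i\<in>I. c i *\<^sub>R x i" "c i"] T_lin[of "x i" "\<Sum>i\<in>I. c i *\<^sub>R x i" "c i"] by simp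
qed

lemma Vc_sum: "finite I \<Longrightarrow> (\<And>i. i \<in> I \<Longrightarrow> x i \<in> Vc) \<Longrightarrow> (\<Sum>i\<in>I. c i *\<^sub>R x i) \<in> Vc"
proof (induction I rule: finite_induct)
  case empty thus ?case using Vc0 by simp
next
  case (insert i I) thus ?case using Vc_lin by simp
qed

lemma Qf_lin: "u \<in> D 2 \<Longrightarrow> w \<in> D 2 \<Longrightarrow> Qf (a *\<^sub>R u + w) = a *\<^sub>R Qf u + Qf w"
proof -
  assume u: "u \<in> D 2" and w: "w \<in> D 2"
  hence u': "u \<in> dT" "aT u \<in> dT" and w': "w \<in> dT" "aT w \<in> dT" using D2_iff by auto
  have 1: "aT (a *\<^sub>R u + w) = a *\<^sub>R aT u + aT w" using T_lin u' w' by simp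
  have 2: "aT (a *\<^sub>R aT u + aT w) = a *\<^sub>R aT (aT u) + aT (aT w)" by (rule T_lin[OF u'(2) w'(2)])
  show ?thesis unfolding Qf_eq 1 2 by (simp add: algebra_simps)
qed

lemma S_lin: "x \<in> Vc \<Longrightarrow> y \<in> Vc \<Longrightarrow> S (a *\<^sub>R x + y) = a *\<^sub>R S x + S y"
proof -
  assume x: "x \<in> Vc" and y: "y \<in> Vc"
  have in2: "a *\<^sub>R S x + S y \<in> D 2" using D_lin S_D2 x y by blast
  have "Qf (a *\<^sub>R S x + S y) = a *\<^sub>R x + y" using Qf_lin S_D2 S_right x y by simp
  hence "S (a *\<^sub>R x + y) = S (Qf (a *\<^sub>R S x + S y))" by simp
  also have "\<dots> = a *\<^sub>R S x + S y" using S_left in2 by blast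
  finally show ?thesis .
qed

lemma S_scale: "x \<in> Vc \<Longrightarrow> S (a *\<^sub>R x) = a *\<^sub>R S x" using S_lin[of x 0 a] Vc0 S_lin[of 0 0 1] by simp
lemma S_add: "x \<in> Vc \<Longrightarrow> y \<in> Vc \<Longrightarrow> S (x + y) = S x + S y" using S_lin[of x y 1] by simp

lemma S_dom: "v \<in> Vc \<Longrightarrow> S v \<in> dT \<and> aT (S v) \<in> dT" using S_D2 D2_iff by blast

lemma TTS: "v \<in> Vc \<Longrightarrow> aT (aT (S v)) = v + (2 * re) *\<^sub>R aT (S v) - nsq *\<^sub>R S v"
  using S_right[of v] by (simp add: Qf_eq algebra_simps)

lemma commute: "u \<in> dT \<Longrightarrow> aT (S u) = S (aT u)"
proof -
  assume u: "u \<in> dT"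
  have uV: "u \<in> Vc" using dom_Vc u .
  define w where "w = S u"
  have w: "w \<in> dT" "aT w \<in> dT" using S_dom uV by (auto simp: w_def)
  have ttw: "aT (aT w) = u + (2 * re) *\<^sub>R aT w - nsq *\<^sub>R w" using TTS uV by (simp add: w_def)
  have ttw_dom: "aT (aT w) \<in> dT" unfolding ttw using u w by (intro dom_diff dom_add dom_scale)
  have tw2: "aT w \<in> D 2" using w ttw_dom D2_iff by blast
  have d1: "(2 * re) *\<^sub>R aT w \<in> dT" "nsq *\<^sub>R w \<in> dT" using w dom_scale by auto
  have d2: "u + (2 * re) *\<^sub>R aT w \<in> dT" using u d1 dom_add by auto
  have "aT (aT (aT w)) = aT (u + (2 * re) *\<^sub>R aT w - nsq *\<^sub>R w)" using ttw by simp
  also have "\<dots> = aT (u + (2 * re) *\<^sub>R aT w) - aT (nsq *\<^sub>R w)" using T_diff d1 d2 by blast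
  also have "\<dots> = aT u + (2 * re) *\<^sub>R aT (aT w) - nsq *\<^sub>R aT w"
    using T_add[OF u d1(1)] T_scale w by simp
  finally have "aT (aT (aT w)) = aT u + (2 * re) *\<^sub>R aT (aT w) - nsq *\<^sub>R aT w" .
  hence "Qf (aT w) = aT u" by (simp add: Qf_eq)
  hence "S (aT u) = aT w" using S_left tw2 by metis
  thus ?thesis by (simp add: w_def)
qed


lemma lim_diff: "f \<longlonglongrightarrow> (a :: 'a) \<Longrightarrow> g \<longlonglongrightarrow> b \<Longrightarrow> (\<lambda>j. f j - g j) \<longlonglongrightarrow> a - b"
  using lim_add[of f a "\<lambda>j. (-1) *\<^sub>R g j" "(-1) *\<^sub>R b"] lim_scale[of g b "-1"] by simp

lemma lim_sum: "finite I \<Longrightarrow> (\<And>i. i \<in> I \<Longrightarrow> (\<lambda>j. f i j) \<longlonglongrightarrow> (a i :: 'a)) \<Longrightarrow>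
   (\<lambda>j. \<Sum>i\<in>I. c i *\<^sub>R f i j) \<longlonglongrightarrow> (\<Sum>i\<in>I. c i *\<^sub>R a i)"
proof (induction I rule: finite_induct)
  case empty thus ?case by simp
next
  case (insert i I)
  have "(\<lambda>j. c i *\<^sub>R f i j + (\<Sum>i\<in>I. c i *\<^sub>R f i j)) \<longlonglongrightarrow> c i *\<^sub>R a i + (\<Sum>i\<in>I. c i *\<^sub>R a i)"
    using insert by (intro lim_add lim_scale) auto
  thus ?case using insert by simp
qed

lemma T_closed_seq:
  assumes xs: "\<And>j. xs j \<in> dT" and lx: "xs \<longlonglongrightarrow> x" and ly: "(\<lambda>j. aT (xs j)) \<longlonglongrightarrow> y"
  shows "x \<in> dT \<and> aT x = y"
proof -
  have xsV: "\<And>j. xs j \<in> Vc" using xs dom_Vc by simp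
  have txsV: "\<And>j. aT (xs j) \<in> Vc" using xs T_Vc by simp
  have xV: "x \<in> Vc" using Vc_closed[OF xsV lx] .
  have yV: "y \<in> Vc" using Vc_closed[OF txsV ly] .
  have h1: "(\<lambda>j. aT (S (xs j))) \<longlonglongrightarrow> aT (S x)" using TS_cont[OF xsV lx xV] .
  have h2: "(\<lambda>j. S (aT (xs j))) \<longlonglongrightarrow> S y" using S_cont[OF txsV ly yV] .
  have eqf: "(\<lambda>j. aT (S (xs j))) = (\<lambda>j. S (aT (xs j)))" using commute xs by simp
  have h1': "(\<lambda>j. aT (S (xs j))) \<longlonglongrightarrow> S y" using h2 unfolding eqf .
  have e: "aT (S x) = S y" using lim_unique[OF h1 h1'] .
  have sx: "S x \<in> dT" "aT (S x) \<in> dT" using S_dom[OF xV] by auto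
  have sy: "S y \<in> dT" "aT (S y) \<in> dT" using S_dom[OF yV] by auto
  have x_eq: "x = aT (S y) - (2 * re) *\<^sub>R S y + nsq *\<^sub>R S x"
    using S_right[OF xV] unfolding Qf_eq e by simp
  have d0: "(2 * re) *\<^sub>R S y \<in> dT" "nsq *\<^sub>R S x \<in> dT" using sy sx dom_scale by auto
  have d1: "aT (S y) - (2 * re) *\<^sub>R S y \<in> dT" using dom_diff[OF sy(2) d0(1)] .
  have xd: "x \<in> dT" using dom_add[OF d1 d0(2)] x_eq by simp
  have "aT x = aT (aT (S y) - (2 * re) *\<^sub>R S y) + aT (nsq *\<^sub>R S x)"
    using T_add[OF d1 d0(2)] x_eq by simp
  also have "\<dots> = aT (aT (S y)) - (2 * re) *\<^sub>R aT (S y) + nsq *\<^sub>R aT (S x)"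
    using T_diff[OF sy(2) d0(1)] T_scale[OF sy(1)] T_scale[OF sx(1)] by simp
  also have "\<dots> = y" using TTS[OF yV] e by simp
  finally show ?thesis using xd by blast
qed

definition evN :: "nat \<Rightarrow> real poly \<Rightarrow> 'a \<Rightarrow> 'a" where
  "evN N p v = (\<Sum>k\<le>N. coeff p k *\<^sub>R Tk k v)"

lemma evN_ext: "degree p \<le> N \<Longrightarrow> N \<le> M \<Longrightarrow> evN M p v = evN N p v"
  unfolding evN_def
  by (rule sum.mono_neutral_right) (auto simp: coeff_eq_0)

lemma evN_add: "evN N (p + q) v = evN N p v + evN N q v"
  by (simp add: evN_def scaleR_add_left sum.distrib)

lemma evN_smult: "evN N (smult c p) v = c *\<^sub>R evN N p v"
  by (simp add: evN_def scaleR_sum_right)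

lemma evN_D: "v \<in> D (N + l) \<Longrightarrow> evN N p v \<in> D l"
  unfolding evN_def using D_sum[of "{..N}" "\<lambda>k. Tk k v" l "\<lambda>k. coeff p k"] Tk_D
  by (metis D_mono atMost_iff finite_atMost le_add_diff_inverse add.assoc add_le_cancel_left le_add1 le_add_diff_inverse2)

lemma evN_Vc: "v \<in> D N \<Longrightarrow> evN N p v \<in> Vc"
  using evN_D[of v N 0 p] D_sub by simp

lemma evN_monom: "k \<le> N \<Longrightarrow> evN N (monom 1 k) v = Tk k v"
proof -
  assume k: "k \<le> N"
  have eq: "(\<lambda>i. coeff (monom 1 k) i *\<^sub>R Tk i v) = (\<lambda>i. if i = k then Tk k v else 0)"
    by (auto simp: coeff_monom)
  show ?thesis unfolding evN_def eq using k by (simp add: sum.delta')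
qed

lemma evN_one: "evN N 1 v = v"
proof -
  have eq: "(\<lambda>i. coeff 1 i *\<^sub>R Tk i v) = (\<lambda>i. if i = 0 then v else 0)"
    by (auto simp: op_pow_app_0)
  show ?thesis unfolding evN_def eq by (simp add: sum.delta')
qed

lemma evN_pCons: "v \<in> D (Suc N) \<Longrightarrow> evN (Suc N) (pCons a p) v = a *\<^sub>R v + aT (evN N p v)"
proof -
  assume v: "v \<in> D (Suc N)"
  have td: "Tk k v \<in> dT" if "k \<in> {..N}" for k
  proof -
    have "v \<in> D (k + Suc (N - k))" using v that by simp
    hence "Tk k v \<in> D (Suc (N - k))" by (rule Tk_D)
    thus ?thesis using D_Suc_iff by blast
  qed
  have "evN (Suc N) (pCons a p) v = coeff (pCons a p) 0 *\<^sub>R Tk 0 v + (\<Sum>k\<le>N. coeff (pCons a p) (Suc k) *\<^sub>R Tk (Suc k) v)"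
    unfolding evN_def by (rule sum.atMost_Suc_shift)
  also have "\<dots> = a *\<^sub>R v + (\<Sum>k\<le>N. coeff p k *\<^sub>R aT (Tk k v))"
    by (simp only: coeff_pCons_0 coeff_pCons_Suc op_pow_app_0 op_pow_app_Suc)
  also have "(\<Sum>k\<le>N. coeff p k *\<^sub>R aT (Tk k v)) = aT (evN N p v)"
    unfolding evN_def using dom_sum[of "{..N}" "\<lambda>k. Tk k v" "\<lambda>k. coeff p k"] td by simp
  finally show ?thesis .
qed


definition qpoly :: "real poly" where "qpoly = [:nsq, - (2 * re), 1:]"

lemma qpoly_deg: "degree qpoly = 2" by (simp add: qpoly_def)
lemma qpoly_nz: "qpoly \<noteq> 0" by (simp add: qpoly_def)

lemma evN_mult_q:
  assumes x: "x \<in> D (N + 2)" and d: "degree d \<le> N"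
  shows "evN (N + 2) (d * qpoly) x = Qf (evN N d x)"
proof -
  define b where "b = - (2 * re)"
  have pe: "d * qpoly = smult nsq d + pCons 0 (smult b d + pCons 0 d)"
    by (simp add: qpoly_def b_def)
  define u where "u = evN N d x"
  have u2: "u \<in> D 2" unfolding u_def by (rule evN_D[OF x])
  hence ud: "u \<in> dT" "aT u \<in> dT" using D2_iff by auto
  have x1: "x \<in> D (Suc (N + 1))" using x by (simp add: numeral_2_eq_2)
  have x0: "x \<in> D (Suc N)" using x D_mono[of "Suc N" "N+2" x] by simp
  have dg: "degree (smult b d + pCons 0 d) \<le> N + 1"
    using d by (intro degree_add_le) (auto intro: le_trans[OF degree_smult_le] le_trans[OF degree_pCons_le])
  have "evN (N + 2) (d * qpoly) x = nsq *\<^sub>R evN (N+2) d x + evN (Suc (N + 1)) (pCons 0 (smult b d + pCons 0 d)) x"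
    by (simp add: pe evN_add evN_smult numeral_2_eq_2)
  also have "evN (N+2) d x = u" unfolding u_def using d by (intro evN_ext) auto
  also have "evN (Suc (N + 1)) (pCons 0 (smult b d + pCons 0 d)) x = aT (evN (N + 1) (smult b d + pCons 0 d) x)"
    using evN_pCons[OF x1] by simp
  also have "evN (N + 1) (smult b d + pCons 0 d) x = b *\<^sub>R u + aT u"
  proof -
    have "evN (Suc N) d x = evN N d x" using evN_ext[OF d, of "Suc N"] by simp
    thus ?thesis using evN_pCons[OF x0, of 0 d] by (simp add: evN_add evN_smult u_def)
  qed
  also have "aT (b *\<^sub>R u + aT u) = b *\<^sub>R aT u + aT (aT u)" by (rule T_lin[OF ud(1) ud(2)])
  finally have fin: "evN (N + 2) (d * qpoly) x = nsq *\<^sub>R u + (b *\<^sub>R aT u + aT (aT u))" .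
  show ?thesis unfolding fin u_def[symmetric] Qf_eq b_def by (simp add: algebra_simps)
qed

lemma evN_lin1: "degree r \<le> 1 \<Longrightarrow> 1 \<le> N \<Longrightarrow> x \<in> D 1 \<Longrightarrow> evN N r x = coeff r 0 *\<^sub>R x + coeff r 1 *\<^sub>R aT x"
  using evN_ext[of r 1 N x] by (simp add: evN_def op_pow_app_0 op_pow_app_Suc)

lemma Qf_Vc: "u \<in> D 2 \<Longrightarrow> Qf u \<in> Vc"
proof -
  assume "u \<in> D 2"
  hence u: "u \<in> dT" "aT u \<in> dT" using D2_iff by auto
  have "aT (aT u) - (2 * re) *\<^sub>R aT u \<in> Vc" using Vc_diff[OF T_Vc[OF u(2)] Vc_scale[OF T_Vc[OF u(1)]]] .
  thus ?thesis unfolding Qf_eq by (rule Vc_add[OF _ Vc_scale[OF dom_Vc[OF u(1)]]])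
qed

lemma wstep:
  assumes x: "x \<in> D (N + 2)" and p: "degree p \<le> N + 2"
  shows "aT (S (evN (N + 2) p x)) = evN (N + 1) (pCons 0 (p div qpoly)) x
     + coeff (p mod qpoly) 0 *\<^sub>R aT (S x)
     + coeff (p mod qpoly) 1 *\<^sub>R (x + (2 * re) *\<^sub>R aT (S x) - nsq *\<^sub>R S x)"
proof -
  define d where "d = p div qpoly"
  define r where "r = p mod qpoly"
  have pdr: "p = d * qpoly + r" unfolding d_def r_def by (rule div_mult_mod_eq[symmetric])
  have rdeg: "degree r \<le> 1"
    using degree_mod_less[OF qpoly_nz, of p] qpoly_deg unfolding r_def by auto
  have ddeg: "degree d \<le> N"
  proof (cases "d = 0")
    case True thus ?thesis by simp
  next
    case False
    have "degree (d * qpoly) = degree d + 2" using False qpoly_nz by (simp add: degree_mult_eq qpoly_deg)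
    moreover have "degree (d * qpoly + r) = degree (d * qpoly)"
      using rdeg \<open>degree (d * qpoly) = degree d + 2\<close> by (intro degree_add_eq_left) simp
    ultimately show ?thesis using p pdr by simp
  qed
  have xV: "x \<in> Vc" using x D_sub by blast
  have x1: "x \<in> D 1" using x by (auto intro: D_mono)
  hence xd: "x \<in> dT" using D_Suc_iff[of x 0] by simp
  have xT: "aT x \<in> Vc" using T_Vc xd by blast
  define u where "u = evN N d x"
  have u2: "u \<in> D 2" unfolding u_def by (rule evN_D[OF x])
  have ud: "u \<in> dT" using u2 D2_iff by auto
  have ev: "evN (N + 2) p x = Qf u + (coeff r 0 *\<^sub>R x + coeff r 1 *\<^sub>R aT x)"
  proof -
    have "evN (N + 2) p x = evN (N + 2) (d * qpoly) x + evN (N + 2) r x"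
      using pdr by (metis evN_add)
    also have "evN (N + 2) (d * qpoly) x = Qf u" unfolding u_def by (rule evN_mult_q[OF x ddeg])
    also have "evN (N + 2) r x = coeff r 0 *\<^sub>R x + coeff r 1 *\<^sub>R aT x"
      by (rule evN_lin1[OF rdeg _ x1]) simp
    finally show ?thesis .
  qed
  have QV: "Qf u \<in> Vc" by (rule Qf_Vc[OF u2])
  have lV: "coeff r 0 *\<^sub>R x + coeff r 1 *\<^sub>R aT x \<in> Vc" using Vc_lin[OF xV Vc_scale[OF xT]] .
  have "S (evN (N + 2) p x) = S (Qf u) + S (coeff r 0 *\<^sub>R x + coeff r 1 *\<^sub>R aT x)"
    unfolding ev by (rule S_add[OF QV lV])
  also have "S (Qf u) = u" by (rule S_left[OF u2])
  also have "S (coeff r 0 *\<^sub>R x + coeff r 1 *\<^sub>R aT x) = coeff r 0 *\<^sub>R S x + coeff r 1 *\<^sub>R S (aT x)"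
    using S_lin[OF xV Vc_scale[OF xT]] S_scale[OF xT] by simp
  finally have se: "S (evN (N + 2) p x) = u + (coeff r 0 *\<^sub>R S x + coeff r 1 *\<^sub>R S (aT x))" .
  have sd: "S x \<in> dT" "S (aT x) \<in> dT" using S_dom[OF xV] S_dom[OF xT] by auto
  have "aT (S (evN (N + 2) p x)) = aT u + aT (coeff r 0 *\<^sub>R S x + coeff r 1 *\<^sub>R S (aT x))"
    unfolding se by (rule T_add[OF ud dom_lin[OF sd(1) dom_scale[OF sd(2)]]])
  also have "aT (coeff r 0 *\<^sub>R S x + coeff r 1 *\<^sub>R S (aT x)) = coeff r 0 *\<^sub>R aT (S x) + coeff r 1 *\<^sub>R aT (S (aT x))"
    using T_lin[OF sd(1) dom_scale[OF sd(2)]] T_scale[OF sd(2)] by simp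
  finally have "aT (S (evN (N + 2) p x)) = aT u + (coeff r 0 *\<^sub>R aT (S x) + coeff r 1 *\<^sub>R aT (S (aT x)))" .
  also have "aT (S (aT x)) = aT (aT (S x))" using commute xd by simp
  also have "\<dots> = x + (2 * re) *\<^sub>R aT (S x) - nsq *\<^sub>R S x" using TTS xV by simp
  also have "aT u = evN (N + 1) (pCons 0 d) x"
    using evN_pCons[of x N 0 d] D_mono[of "Suc N" "N + 2" x] x by (simp add: u_def)
  finally have fin: "aT (S (evN (N + 2) p x)) = evN (N + 1) (pCons 0 d) x + (coeff r 0 *\<^sub>R aT (S x) + coeff r 1 *\<^sub>R (x + (2 * re) *\<^sub>R aT (S x) - nsq *\<^sub>R S x))" .
  show ?thesis using fin by (simp only: d_def r_def add.assoc)
qed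


lemma degree_div_q: "degree p \<ge> 2 \<Longrightarrow> degree (pCons 0 (p div qpoly)) = degree p - 1"
proof -
  assume p: "degree p \<ge> 2"
  define d where "d = p div qpoly"
  define r where "r = p mod qpoly"
  have pdr: "p = d * qpoly + r" unfolding d_def r_def by (rule div_mult_mod_eq[symmetric])
  have rdeg: "degree r \<le> 1"
    using degree_mod_less[OF qpoly_nz, of p] qpoly_deg unfolding r_def by auto
  have dnz: "d \<noteq> 0"
  proof
    assume "d = 0"
    hence "p = r" using pdr by simp
    thus False using rdeg p by simp
  qed
  have "degree (d * qpoly) = degree d + 2" using dnz qpoly_nz by (simp add: degree_mult_eq qpoly_deg)
  moreover have "degree (d * qpoly + r) = degree (d * qpoly)"
    using rdeg \<open>degree (d * qpoly) = degree d + 2\<close> by (intro degree_add_eq_left) simp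
  ultimately have "degree d = degree p - 2" using pdr by simp
  thus ?thesis using dnz p by (simp add: d_def)
qed

theorem core_main:
  assumes xs: "\<And>j. xs j \<in> D m" and lx: "xs \<longlonglongrightarrow> x"
    and P: "degree P = m" and ly: "(\<lambda>j. evN m P (xs j)) \<longlonglongrightarrow> y"
  shows "x \<in> D m \<and> evN m P x = y"
proof -
  have xsV: "xs j \<in> Vc" for j using xs D_sub by blast
  have xV: "x \<in> Vc" using Vc_closed[OF xsV lx] .
  define good where "good p \<longleftrightarrow> degree p \<le> m \<and> (\<exists>l. (\<lambda>j. evN m p (xs j)) \<longlonglongrightarrow> l)" for p
  have good_lin: "good (smult c p + q)" if gp: "good p" and gq: "good q" for c p q
  proof -
    obtain l1 where "(\<lambda>j. evN m p (xs j)) \<longlonglongrightarrow> l1" using gp unfolding good_def by blast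
    moreover obtain l2 where "(\<lambda>j. evN m q (xs j)) \<longlonglongrightarrow> l2" using gq unfolding good_def by blast
    ultimately have "(\<lambda>j. c *\<^sub>R evN m p (xs j) + evN m q (xs j)) \<longlonglongrightarrow> c *\<^sub>R l1 + l2"
      by (intro lim_add lim_scale)
    moreover have "degree (smult c p + q) \<le> m"
      using gp gq unfolding good_def by (intro degree_add_le) (auto intro: le_trans[OF degree_smult_le])
    ultimately show ?thesis unfolding good_def by (auto simp: evN_add evN_smult)
  qed
  have good1: "good 1" unfolding good_def using lx by (auto simp: evN_one)
  have goodP: "good P" unfolding good_def using ly P by auto
  have step: "good (pCons 0 (p div qpoly))" if g: "good p" and m2: "m \<ge> 2" for p
  proof -
    obtain N where N: "m = N + 2" using m2 by (metis add.commute le_Suc_ex)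
    obtain l where l: "(\<lambda>j. evN m p (xs j)) \<longlonglongrightarrow> l" using g unfolding good_def by blast
    have evV: "\<And>j. evN m p (xs j) \<in> Vc" using evN_Vc xs by simp
    have lV: "l \<in> Vc" by (rule Vc_closed[OF evV l])
    have a1: "(\<lambda>j. aT (S (evN m p (xs j)))) \<longlonglongrightarrow> aT (S l)"
      by (rule TS_cont[OF evV l lV])
    have a2: "(\<lambda>j. aT (S (xs j))) \<longlonglongrightarrow> aT (S x)" using TS_cont[OF xsV lx xV] .
    have a3: "(\<lambda>j. S (xs j)) \<longlonglongrightarrow> S x" using S_cont[OF xsV lx xV] .
    define c0 where "c0 = coeff (p mod qpoly) 0"
    define c1 where "c1 = coeff (p mod qpoly) 1"
    have e: "evN m (pCons 0 (p div qpoly)) (xs j) = aT (S (evN m p (xs j))) - c0 *\<^sub>R aT (S (xs j))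
        - c1 *\<^sub>R (xs j + (2 * re) *\<^sub>R aT (S (xs j)) - nsq *\<^sub>R S (xs j))" for j
    proof -
      have dg: "degree (pCons 0 (p div qpoly)) \<le> N + 1"
      proof (cases "degree p \<ge> 2")
        case True
        have "degree (pCons 0 (p div qpoly)) = degree p - 1" by (rule degree_div_q[OF True])
        moreover have "degree p \<le> m" using g unfolding good_def by blast
        ultimately show ?thesis using N by linarith
      next
        case False
        hence "p div qpoly = 0" using qpoly_deg by (intro div_poly_less) auto
        thus ?thesis by simp
      qed
      have "evN m (pCons 0 (p div qpoly)) (xs j) = evN (N + 1) (pCons 0 (p div qpoly)) (xs j)"
        using N dg by (intro evN_ext) auto
      thus ?thesis using wstep[of "xs j" N p] xs g N good_def
        by (simp add: c0_def c1_def algebra_simps)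
    qed
    have "(\<lambda>j. aT (S (evN m p (xs j))) - c0 *\<^sub>R aT (S (xs j))
        - c1 *\<^sub>R (xs j + (2 * re) *\<^sub>R aT (S (xs j)) - nsq *\<^sub>R S (xs j))) \<longlonglongrightarrow>
        aT (S l) - c0 *\<^sub>R aT (S x) - c1 *\<^sub>R (x + (2 * re) *\<^sub>R aT (S x) - nsq *\<^sub>R S x)"
      using a1 a2 a3 lx by (intro lim_diff lim_scale lim_add) auto
    moreover have "degree (pCons 0 (p div qpoly)) \<le> m"
    proof (cases "degree p \<ge> 2")
      case True
      have "degree (pCons 0 (p div qpoly)) = degree p - 1" by (rule degree_div_q[OF True])
      moreover have "degree p \<le> m" using g unfolding good_def by blast
      ultimately show ?thesis by linarith
    next
      case False
      hence "p div qpoly = 0" using qpoly_deg by (intro div_poly_less) auto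
      thus ?thesis by simp
    qed
    ultimately show ?thesis unfolding good_def e by blast
  qed
  have exdeg: "\<exists>w. good w \<and> degree w = m - i" if "i \<le> m" for i
    using that
  proof (induction i)
    case 0 thus ?case using goodP P by auto
  next
    case (Suc i)
    then obtain w where w: "good w" "degree w = m - i" by auto
    show ?case
    proof (cases "m - Suc i = 0")
      case True thus ?thesis using good1 by (intro exI[of _ 1]) simp
    next
      case False
      hence "degree w \<ge> 2" using w Suc by simp
      hence "degree (pCons 0 (w div qpoly)) = m - Suc i" using degree_div_q w by simp
      moreover have "good (pCons 0 (w div qpoly))"
      proof (rule step[OF w(1)])
        show "m \<ge> 2" using \<open>degree w \<ge> 2\<close> w(1) unfolding good_def by linarith
      qed
      ultimately show ?thesis by blast
    qed
  qed
  have allgood: "\<forall>p. degree p \<le> k \<longrightarrow> good p" if "k \<le> m" for k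
    using that
  proof (induction k)
    case 0
    show ?case
    proof (intro allI impI)
      fix p :: "real poly" assume "degree p \<le> 0"
      hence "p = [:coeff p 0:]" using degree_0_id[of p] by simp
      hence "p = smult (coeff p 0) 1 + 0" by (simp add: one_pCons)
      moreover have "good 0" unfolding good_def by (auto simp: evN_def)
      ultimately show "good p" using good_lin[OF good1 \<open>good 0\<close>, of "coeff p 0"] by simp
    qed
  next
    case (Suc k)
    obtain w where w: "good w" "degree w = Suc k" using exdeg[of "m - Suc k"] Suc by auto
    have "w \<noteq> 0" using w(2) by auto
    hence wl: "lead_coeff w \<noteq> 0" by simp
    show ?case
    proof (intro allI impI)
      fix p :: "real poly" assume pk: "degree p \<le> Suc k"
      define c where "c = coeff p (Suc k) / lead_coeff w"
      define p' where "p' = smult (- c) w + p"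
      have "degree p' \<le> k"
      proof (rule degree_le, intro allI impI)
        fix i assume "k < i"
        show "coeff p' i = 0"
        proof (cases "i = Suc k")
          case True thus ?thesis using wl w by (simp add: p'_def c_def)
        next
          case False
          hence "i > Suc k" using \<open>k < i\<close> by simp
          thus ?thesis using pk w by (simp add: p'_def coeff_eq_0)
        qed
      qed
      hence "good p'" using Suc by auto
      hence "good (smult c w + p')" using good_lin[OF w(1)] by blast
      moreover have "smult c w + p' = p" by (simp add: p'_def smult_add_left[symmetric] add.assoc[symmetric])
      ultimately show "good p" by simp
    qed
  qed
  have conv: "\<exists>z. (\<lambda>j. Tk k (xs j)) \<longlonglongrightarrow> z" if "k \<le> m" for k
  proof -
    have "good (monom 1 k)" using allgood[OF order_refl] that by (simp add: degree_monom_eq)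
    thus ?thesis unfolding good_def using evN_monom that by simp
  qed
  then obtain z where z: "\<And>k. k \<le> m \<Longrightarrow> (\<lambda>j. Tk k (xs j)) \<longlonglongrightarrow> z k" by metis
  have lim: "x \<in> D k \<and> Tk k x = z k" if "k \<le> m" for k
    using that
  proof (induction k)
    case 0
    have "(\<lambda>j. Tk 0 (xs j)) = xs" by (simp add: op_pow_app_0)
    thus ?case using z[of 0] lx lim_unique xV by (metis op_pow_dom_0 op_pow_app_0 zero_le)
  next
    case (Suc k)
    hence IH: "x \<in> D k" "Tk k x = z k" by auto
    have d: "Tk k (xs j) \<in> dT" for j
    proof -
      have "xs j \<in> D (k + Suc (m - Suc k))" using xs Suc.prems by simp
      hence "Tk k (xs j) \<in> D (Suc (m - Suc k))" by (rule Tk_D)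
      thus ?thesis using D_Suc_iff by blast
    qed
    have "(\<lambda>j. aT (Tk k (xs j))) \<longlonglongrightarrow> z (Suc k)" using z[OF Suc.prems] by (simp add: op_pow_app_Suc)
    hence "Tk k x \<in> dT \<and> aT (Tk k x) = z (Suc k)"
      using T_closed_seq[OF d] z[of k] Suc.prems IH by simp
    thus ?case using IH by (simp add: op_pow_dom_Suc op_pow_app_Suc)
  qed
  have "(\<lambda>j. evN m P (xs j)) \<longlonglongrightarrow> evN m P x"
    unfolding evN_def using lim z by (intro lim_sum) auto
  hence "evN m P x = y" using lim_unique[OF _ ly] by blast
  thus ?thesis using lim by blast
qed


lemma poly_graph_closed_seq:
  assumes f: "\<And>n. f n \<in> {(x, op_app (op_poly Vc T P) x) | x. x \<in> op_dom (op_poly Vc T P)}"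
    and la: "(\<lambda>n. fst (f n)) \<longlonglongrightarrow> a" and lb: "(\<lambda>n. snd (f n)) \<longlonglongrightarrow> b"
  shows "(a, b) \<in> {(x, op_app (op_poly Vc T P) x) | x. x \<in> op_dom (op_poly Vc T P)}"
proof -
  have app: "op_app (op_poly Vc T P) = evN (degree P) P"
    by (simp add: op_poly_def evN_def fun_eq_iff)
  have dom: "op_dom (op_poly Vc T P) = D (degree P)" by (simp add: op_poly_def)
  have xs: "fst (f n) \<in> D (degree P)" and ys: "snd (f n) = evN (degree P) P (fst (f n))" for n
    using f[of n] unfolding app dom by auto
  have "(\<lambda>n. evN (degree P) P (fst (f n))) \<longlonglongrightarrow> b" using lb ys by simp
  hence "a \<in> D (degree P) \<and> evN (degree P) P a = b" using core_main[OF xs la refl] by blast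
  thus ?thesis unfolding app dom by blast
qed

end


lemma quat_case:
  fixes L :: "quat \<Rightarrow> 'v::banach \<Rightarrow> 'v" and R :: "'v \<Rightarrow> quat \<Rightarrow> 'v" and T :: "'v op" and P :: "real poly"
  assumes H: "two_sided_qbanach L R" and K: "qK R T" and rho: "q_rhoS R T \<noteq> {}"
  shows "op_closed (op_poly UNIV T P)"
proof -
  obtain s where "s \<in> q_rhoS R T" using rho by blast
  define re where "re = qRe s"
  define nsq where "nsq = (qabs s)\<^sup>2"
  have inv: "inv_in UNIV (op_Q UNIV T re nsq) (qB R)"
    using \<open>s \<in> q_rhoS R T\<close> by (simp add: q_rhoS_def re_def nsq_def)
  then obtain S where SB: "S \<in> qB R"
    and Sr: "\<And>v. S v \<in> op_dom (op_Q UNIV T re nsq) \<and> op_app (op_Q UNIV T re nsq) (S v) = v"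
    and Sl: "\<And>u. u \<in> op_dom (op_Q UNIV T re nsq) \<Longrightarrow> S (op_app (op_Q UNIV T re nsq) u) = u"
    unfolding inv_in_def by blast
  have Sbl: "bounded_linear S" using SB by (simp add: qB_def)
  have Rr: "\<And>r v. R v (qreal r) = r *\<^sub>R v" using H by (simp add: two_sided_qbanach_def)
  have K0: "0 \<in> op_dom T" and Kadd: "\<And>u w. u \<in> op_dom T \<Longrightarrow> w \<in> op_dom T \<Longrightarrow> u + w \<in> op_dom T"
    and KR: "\<And>u a. u \<in> op_dom T \<Longrightarrow> R u a \<in> op_dom T"
    and Klin: "\<And>u w a. u \<in> op_dom T \<Longrightarrow> w \<in> op_dom T \<Longrightarrow> op_app T (R u a + w) = R (op_app T u) a + op_app T w"
    and Kcl: "op_closed T"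
    using K unfolding qK_def by blast+
  have dom_lin: "a *\<^sub>R x + y \<in> op_dom T" if "x \<in> op_dom T" "y \<in> op_dom T" for x y a
    using KR[OF that(1), of "qreal a"] Kadd that by (simp add: Rr)
  have T_lin: "op_app T (a *\<^sub>R x + y) = a *\<^sub>R op_app T x + op_app T y" if "x \<in> op_dom T" "y \<in> op_dom T" for x y a
    using Klin[OF that, of "qreal a"] by (simp add: Rr)
  have T0: "op_app T 0 = 0" using T_lin[OF K0 K0, of 1] by simp
  have domQ: "op_dom (op_Q UNIV T re nsq) = op_dom (op_pow UNIV T 2)" by (simp add: op_Q_def op_dom_def)
  have SdomT: "S v \<in> op_dom T" for v
    using Sr[of v] unfolding domQ by (simp add: numeral_2_eq_2 op_pow_dom_Suc op_pow_dom_0 op_pow_app_0)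
  have TS_bl: "bounded_linear (\<lambda>v. op_app T (S v))"
  proof (rule closed_graph_bounded)
    fix x y
    show "op_app T (S (x + y)) = op_app T (S x) + op_app T (S y)"
      using T_lin[OF SdomT SdomT, of 1] linear_add[OF bounded_linear.linear[OF Sbl]] by simp
  next
    fix c x
    show "op_app T (S (c *\<^sub>R x)) = c *\<^sub>R op_app T (S x)"
      using T_lin[OF SdomT K0, of c x] T0
        linear_scale[OF bounded_linear.linear[OF Sbl]] by simp
  next
    fix xs x y assume lx: "xs \<longlonglongrightarrow> x" and ly: "(\<lambda>j. op_app T (S (xs j))) \<longlonglongrightarrow> y"
    have ls: "(\<lambda>j. S (xs j)) \<longlonglongrightarrow> S x" using bounded_linear.tendsto[OF Sbl lx] .
    have G: "closed {(x, op_app T x) | x. x \<in> op_dom T}" using Kcl by (simp add: op_closed_def)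
    have lim: "(\<lambda>j. (S (xs j), op_app T (S (xs j)))) \<longlonglongrightarrow> (S x, y)" using ls ly by (rule tendsto_Pair)
    have Geq: "{(x, op_app T x) | x. x \<in> op_dom T} = (\<lambda>x. (x, op_app T x)) ` op_dom T"
      by auto
    have G': "closed ((\<lambda>x. (x, op_app T x)) ` op_dom T)" using G unfolding Geq .
    have mem: "(S (xs j), op_app T (S (xs j))) \<in> (\<lambda>x. (x, op_app T x)) ` op_dom T" for j
      by (rule imageI[OF SdomT])
    have "(S x, y) \<in> (\<lambda>x. (x, op_app T x)) ` op_dom T"
      by (rule closed_sequentially[OF G' mem lim])
    thus "op_app T (S x) = y" by (simp add: image_iff)
  qed
  interpret core UNIV T S re nsq
  proof
    show "\<And>xs x. (\<And>j. xs j \<in> UNIV) \<Longrightarrow> xs \<longlonglongrightarrow> x \<Longrightarrow> x \<in> UNIV \<Longrightarrow> (\<lambda>j. S (xs j)) \<longlonglongrightarrow> S x"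
      using bounded_linear.tendsto[OF Sbl] by blast
    show "\<And>xs x. (\<And>j. xs j \<in> UNIV) \<Longrightarrow> xs \<longlonglongrightarrow> x \<Longrightarrow> x \<in> UNIV \<Longrightarrow> (\<lambda>j. op_app T (S (xs j))) \<longlonglongrightarrow> op_app T (S x)"
      using bounded_linear.tendsto[OF TS_bl] by blast
    show "\<And>v. v \<in> UNIV \<Longrightarrow> S v \<in> op_dom (op_pow UNIV T 2)" using Sr domQ by simp
    show "\<And>v. v \<in> UNIV \<Longrightarrow> op_app (op_Q UNIV T re nsq) (S v) = v" using Sr by simp
    show "\<And>u. u \<in> op_dom (op_pow UNIV T 2) \<Longrightarrow> S (op_app (op_Q UNIV T re nsq) u) = u" using Sl domQ by simp
    show "\<And>f g a b. f \<longlonglongrightarrow> (a::'v) \<Longrightarrow> g \<longlonglongrightarrow> b \<Longrightarrow> (\<lambda>j. f j + g j) \<longlonglongrightarrow> a + b" by (rule tendsto_add)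
    show "\<And>f a c. f \<longlonglongrightarrow> (a::'v) \<Longrightarrow> (\<lambda>j. c *\<^sub>R f j) \<longlonglongrightarrow> c *\<^sub>R a" by (intro tendsto_scaleR tendsto_const)
    show "\<And>f a b. f \<longlonglongrightarrow> (a::'v) \<Longrightarrow> f \<longlonglongrightarrow> b \<Longrightarrow> a = b" by (rule LIMSEQ_unique)
  qed (use K0 dom_lin T_lin in auto)
  show ?thesis
    unfolding op_closed_def closed_sequential_limits
  proof (intro allI impI)
    fix f l assume A: "(\<forall>n. f n \<in> {(x, op_app (op_poly UNIV T P) x) |x. x \<in> op_dom (op_poly UNIV T P)}) \<and> f \<longlonglongrightarrow> l"
    have "(fst l, snd l) \<in> {(x, op_app (op_poly UNIV T P) x) |x. x \<in> op_dom (op_poly UNIV T P)}"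
      using A by (intro poly_graph_closed_seq) (auto intro: tendsto_fst tendsto_snd)
    thus "l \<in> {(x, op_app (op_poly UNIV T P) x) |x. x \<in> op_dom (op_poly UNIV T P)}" by simp
  qed
qed



lemma fun_scaleR_app [simp]: "(c *\<^sub>R f) x = c *\<^sub>R f x" by (simp add: scaleR_fun_def)
lemma fun_plus_app [simp]: "(f + g) x = f x + g x" by (simp add: plus_fun_def)
lemma fun_zero_app [simp]: "(0 :: 'a \<Rightarrow> 'b::zero) x = 0" by (simp add: zero_fun_def)

lemma tendsto_fun_iff:
  fixes f :: "'x \<Rightarrow> 'i \<Rightarrow> 'b::topological_space"
  shows "(f \<longlongrightarrow> l) F \<longleftrightarrow> (\<forall>i. ((\<lambda>c. f c i) \<longlongrightarrow> l i) F)"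
proof -
  have "(f \<longlongrightarrow> l) F \<longleftrightarrow> limitin (product_topology (\<lambda>i. euclidean) UNIV) f l F"
    by (simp add: euclidean_product_topology)
  also have "\<dots> \<longleftrightarrow> (\<forall>i. ((\<lambda>c. f c i) \<longlongrightarrow> l i) F)"
    by (simp add: limitin_componentwise)
  finally show ?thesis .
qed

lemma rco_props:
  assumes "real_closed_op Ti"
  shows "0 \<in> op_dom Ti" "\<And>x y. x \<in> op_dom Ti \<Longrightarrow> y \<in> op_dom Ti \<Longrightarrow> x + y \<in> op_dom Ti"
    "\<And>x c. x \<in> op_dom Ti \<Longrightarrow> c *\<^sub>R x \<in> op_dom Ti"
    "\<And>x y c. x \<in> op_dom Ti \<Longrightarrow> y \<in> op_dom Ti \<Longrightarrow> op_app Ti (c *\<^sub>R x + y) = c *\<^sub>R op_app Ti x + op_app Ti y"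
    "op_closed Ti"
  using assms unfolding real_closed_op_def subspace_def by auto

lemma rco_zero: "real_closed_op Ti \<Longrightarrow> op_app Ti 0 = 0"
  using rco_props(4)[of Ti 0 0 1] rco_props(1)[of Ti] by simp

lemma rco_sum:
  assumes Ti: "real_closed_op Ti" and I: "finite I" and x: "\<And>k. k \<in> I \<Longrightarrow> x k \<in> op_dom Ti"
  shows "(\<Sum>k\<in>I. c k *\<^sub>R x k) \<in> op_dom Ti \<and> op_app Ti (\<Sum>k\<in>I. c k *\<^sub>R x k) = (\<Sum>k\<in>I. c k *\<^sub>R op_app Ti (x k))"
  using I x
proof (induction I rule: finite_induct)
  case empty thus ?case using rco_props(1)[OF Ti] rco_zero[OF Ti] by simp
next
  case (insert i I)
  hence IH: "(\<Sum>k\<in>I. c k *\<^sub>R x k) \<in> op_dom Ti" "op_app Ti (\<Sum>k\<in>I. c k *\<^sub>R x k) = (\<Sum>k\<in>I. c k *\<^sub>R op_app Ti (x k))"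
    by auto
  have xi: "x i \<in> op_dom Ti" using insert by simp
  show ?case using insert(1,2) IH rco_props(2)[OF Ti rco_props(3)[OF Ti xi] IH(1)] rco_props(4)[OF Ti xi IH(1)]
    by simp
qed

lemma cliff_act_lim:
  fixes f :: "nat \<Rightarrow> 'w::real_normed_vector \<Rightarrow> 'w"
  assumes "\<And>i A. i \<le> n \<Longrightarrow> (\<lambda>j. f i (X j A)) \<longlonglongrightarrow> f i (Y A)"
  shows "(\<lambda>j. cliff_act n f (X j) B) \<longlonglongrightarrow> cliff_act n f Y B"
proof (cases "B \<subseteq> {1..n}")
  case True
  have "(\<lambda>j. f 0 (X j B) + (\<Sum>i\<in>{1..n}. cliff_sign i B *\<^sub>R f i (X j (if i \<in> B then B - {i} else insert i B))))
     \<longlonglongrightarrow> f 0 (Y B) + (\<Sum>i\<in>{1..n}. cliff_sign i B *\<^sub>R f i (Y (if i \<in> B then B - {i} else insert i B)))"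
    using assms by (intro tendsto_add tendsto_sum tendsto_scaleR tendsto_const) auto
  thus ?thesis using True by (simp add: cliff_act_def)
next
  case False thus ?thesis by (simp add: cliff_act_def)
qed

lemma cliff_act_lin:
  fixes f :: "nat \<Rightarrow> 'w::real_normed_vector \<Rightarrow> 'w"
  assumes lin: "\<And>i u w. i \<le> n \<Longrightarrow> u \<in> Dm i \<Longrightarrow> w \<in> Dm i \<Longrightarrow> f i (a *\<^sub>R u + w) = a *\<^sub>R f i u + f i w"
    and x: "\<And>A i. i \<le> n \<Longrightarrow> x A \<in> Dm i" and y: "\<And>A i. i \<le> n \<Longrightarrow> y A \<in> Dm i"
  shows "cliff_act n f (a *\<^sub>R x + y) = a *\<^sub>R cliff_act n f x + cliff_act n f y"
proof (rule ext)
  fix B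
  show "cliff_act n f (a *\<^sub>R x + y) B = (a *\<^sub>R cliff_act n f x + cliff_act n f y) B"
  proof (cases "B \<subseteq> {1..n}")
    case True
    have s: "(\<Sum>i\<in>{1..n}. cliff_sign i B *\<^sub>R f i (a *\<^sub>R x (g i) + y (g i))) =
          a *\<^sub>R (\<Sum>i\<in>{1..n}. cliff_sign i B *\<^sub>R f i (x (g i))) + (\<Sum>i\<in>{1..n}. cliff_sign i B *\<^sub>R f i (y (g i)))"
      for g :: "nat \<Rightarrow> nat set"
      using lin x y by (simp add: scaleR_sum_right sum.distrib[symmetric] scaleR_add_right algebra_simps)
    show ?thesis using True s[of "\<lambda>i. if i \<in> B then B - {i} else insert i B"] lin[of 0 "x B" "y B"] x y
      by (simp add: cliff_act_def algebra_simps)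
  next
    case False thus ?thesis by (simp add: cliff_act_def)
  qed
qed


lemma rco_cliff:
  assumes Ti: "real_closed_op Ti" and Sd: "\<And>k w. k \<le> n \<Longrightarrow> Ss k w \<in> op_dom Ti"
  shows "op_app Ti (cliff_act n Ss v A) = cliff_act n (\<lambda>k w. op_app Ti (Ss k w)) v A"
proof (cases "A \<subseteq> {1..n}")
  case True
  define g where "g i = (if i \<in> A then A - {i} else insert i A)" for i
  have sum: "(\<Sum>i\<in>{1..n}. cliff_sign i A *\<^sub>R Ss i (v (g i))) \<in> op_dom Ti \<and>
     op_app Ti (\<Sum>i\<in>{1..n}. cliff_sign i A *\<^sub>R Ss i (v (g i))) = (\<Sum>i\<in>{1..n}. cliff_sign i A *\<^sub>R op_app Ti (Ss i (v (g i))))"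
    by (rule rco_sum[OF Ti]) (auto intro: Sd)
  have "op_app Ti (Ss 0 (v A) + (\<Sum>i\<in>{1..n}. cliff_sign i A *\<^sub>R Ss i (v (g i))))
     = op_app Ti (Ss 0 (v A)) + op_app Ti (\<Sum>i\<in>{1..n}. cliff_sign i A *\<^sub>R Ss i (v (g i)))"
    using rco_props(4)[OF Ti Sd[of 0 "v A"] conjunct1[OF sum], of 1] by simp
  thus ?thesis using True sum by (simp add: cliff_act_def g_def)
next
  case False thus ?thesis using rco_zero[OF Ti] by (simp add: cliff_act_def)
qed

lemma cliff_V_closed: "closed (cliff_V n :: (nat set \<Rightarrow> 'w::real_normed_vector) set)"
proof -
  have "cliff_V n = (\<Inter>A\<in>{A. \<not> A \<subseteq> {1..n}}. {v :: nat set \<Rightarrow> 'w. v A = 0})"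
    by (auto simp: cliff_V_def)
  moreover have "closed {v :: nat set \<Rightarrow> 'w. v A = 0}" for A
    by (rule closed_Collect_eq) (auto intro: continuous_on_const)
  ultimately show ?thesis by (auto intro: closed_INT)
qed

lemma cliff_case:
  fixes T' :: "(nat set \<Rightarrow> 'w::banach) op" and P :: "real poly"
  assumes K: "cK n T'" and rho: "c_rhoS n T' \<noteq> {}"
  shows "op_closed (op_poly (cliff_V n) T' P)"
proof -
  define Vc where "Vc = (cliff_V n :: (nat set \<Rightarrow> 'w) set)"
  obtain Ts where Ts: "\<And>i. i \<le> n \<Longrightarrow> real_closed_op (Ts i)" and T'eq: "T' = para_op n Ts"
    using K unfolding cK_def by blast
  obtain s where "s \<in> c_rhoS n T'" using rho by blast
  define re where "re = s 0"
  define nsq where "nsq = (\<Sum>i\<le>n. (s i)\<^sup>2)"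
  have inv: "inv_in Vc (op_Q Vc T' re nsq) (cB n)"
    using \<open>s \<in> c_rhoS n T'\<close> by (simp add: c_rhoS_def re_def nsq_def Vc_def)
  then obtain S where SB: "S \<in> cB n"
    and Sr: "\<And>v. v \<in> Vc \<Longrightarrow> S v \<in> op_dom (op_Q Vc T' re nsq) \<and> op_app (op_Q Vc T' re nsq) (S v) = v"
    and Sl: "\<And>u. u \<in> op_dom (op_Q Vc T' re nsq) \<Longrightarrow> S (op_app (op_Q Vc T' re nsq) u) = u"
    unfolding inv_in_def by blast
  obtain Ss where Ssbl: "\<And>i. i \<le> n \<Longrightarrow> bounded_linear (Ss i)" and Seq: "\<And>v. v \<in> Vc \<Longrightarrow> S v = cliff_act n Ss v"
    using SB unfolding cB_def Vc_def by blast
  define Tf where "Tf = (\<lambda>i. op_app (Ts i))"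
  have domT: "op_dom T' = {v \<in> Vc. \<forall>A. \<forall>i\<le>n. v A \<in> op_dom (Ts i)}"
    by (simp add: T'eq para_op_def Vc_def)
  have appT: "op_app T' = cliff_act n Tf" by (simp add: T'eq para_op_def Tf_def fun_eq_iff)
  have domQ: "op_dom (op_Q Vc T' re nsq) = op_dom (op_pow Vc T' 2)" by (simp add: op_Q_def)
  have SdomT: "S v \<in> op_dom T'" if "v \<in> Vc" for v
    using Sr[OF that] unfolding domQ by (simp add: numeral_2_eq_2 op_pow_dom_Suc op_pow_dom_0 op_pow_app_0)
  have Ss0: "Ss k 0 = 0" if "k \<le> n" for k using Ssbl[OF that] by (simp add: linear_simps)
  have stepA: "Ss k w \<in> op_dom (Ts i)" if ik: "i \<le> n" "k \<le> n" for i k w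
  proof -
    define dl where "dl = (\<lambda>A::nat set. if A = {} then w else 0)"
    have dV: "dl \<in> Vc" by (simp add: dl_def Vc_def cliff_V_def)
    have inD: "cliff_act n Ss dl B \<in> op_dom (Ts i)" for B
      using SdomT[OF dV] Seq[OF dV] ik(1) unfolding domT by auto
    show ?thesis
    proof (cases "k = 0")
      case True
      have "cliff_act n Ss dl {} = Ss 0 w"
        using Ss0 by (simp add: cliff_act_def dl_def)
      thus ?thesis using inD[of "{}"] True by simp
    next
      case False
      hence k1: "k \<in> {1..n}" using ik by auto
      have cs: "cliff_sign k {k} = 1"
      proof -
        have e: "{j\<in>{k}. j < k} = {}" by auto
        show ?thesis unfolding cliff_sign_def e by simp
      qed
      have eqs: "cliff_sign i {k} *\<^sub>R Ss i (dl (if i \<in> {k} then {k} - {i} else insert i {k})) = (if i = k then Ss k w else 0)"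
        if "i \<in> {1..n}" for i
        using that Ss0 cs by (auto simp: dl_def)
      have "cliff_act n Ss dl {k} = Ss 0 (dl {k}) + (\<Sum>i\<in>{1..n}. (if i = k then Ss k w else 0))"
        using k1 eqs by (simp add: cliff_act_def)
      also have "\<dots> = Ss k w" using k1 Ss0[of 0] by (simp add: dl_def)
      finally show ?thesis using inD[of "{k}"] by simp
    qed
  qed
  have Kbl: "bounded_linear (\<lambda>w. Tf i (Ss k w))" if ik: "i \<le> n" "k \<le> n" for i k
  proof (rule closed_graph_bounded)
    note Ti = Ts[OF ik(1)]
    have lk: "linear (Ss k)" using Ssbl[OF ik(2)] bounded_linear.linear by blast
    fix x y
    show "Tf i (Ss k (x + y)) = Tf i (Ss k x) + Tf i (Ss k y)"
      using rco_props(4)[OF Ti stepA[OF ik] stepA[OF ik], of 1] linear_add[OF lk] by (simp add: Tf_def)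
  next
    note Ti = Ts[OF ik(1)]
    have lk: "linear (Ss k)" using Ssbl[OF ik(2)] bounded_linear.linear by blast
    fix c x
    show "Tf i (Ss k (c *\<^sub>R x)) = c *\<^sub>R Tf i (Ss k x)"
      using rco_props(4)[OF Ti stepA[OF ik] rco_props(1)[OF Ti], of c x] rco_zero[OF Ti] linear_scale[OF lk]
      by (simp add: Tf_def)
  next
    note Ti = Ts[OF ik(1)]
    fix xs x y assume lx: "xs \<longlonglongrightarrow> x" and ly: "(\<lambda>j. Tf i (Ss k (xs j))) \<longlonglongrightarrow> y"
    have ls: "(\<lambda>j. Ss k (xs j)) \<longlonglongrightarrow> Ss k x" using bounded_linear.tendsto[OF Ssbl[OF ik(2)] lx] .
    have G: "closed {(x, op_app (Ts i) x) | x. x \<in> op_dom (Ts i)}" using rco_props(5)[OF Ti] by (simp add: op_closed_def)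
    have lim: "(\<lambda>j. (Ss k (xs j), op_app (Ts i) (Ss k (xs j)))) \<longlonglongrightarrow> (Ss k x, y)"
      using ls ly unfolding Tf_def by (rule tendsto_Pair)
    have Geq: "{(x, op_app (Ts i) x) | x. x \<in> op_dom (Ts i)} = (\<lambda>x. (x, op_app (Ts i) x)) ` op_dom (Ts i)"
      by auto
    have G': "closed ((\<lambda>x. (x, op_app (Ts i) x)) ` op_dom (Ts i))" using G unfolding Geq .
    have mem: "(Ss k (xs j), op_app (Ts i) (Ss k (xs j))) \<in> (\<lambda>x. (x, op_app (Ts i) x)) ` op_dom (Ts i)" for j
      by (rule imageI[OF stepA[OF ik]])
    have "(Ss k x, y) \<in> (\<lambda>x. (x, op_app (Ts i) x)) ` op_dom (Ts i)"
      by (rule closed_sequentially[OF G' mem lim])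
    thus "Tf i (Ss k x) = y" by (auto simp: image_iff Tf_def)
  qed
  have stepC: "Tf i (S v A) = cliff_act n (\<lambda>k w. Tf i (Ss k w)) v A" if "i \<le> n" "v \<in> Vc" for i v A
    using rco_cliff[OF Ts[OF that(1)], of n Ss v A] stepA[OF that(1)] Seq[OF that(2)] by (simp add: Tf_def)
  have comp: "(\<lambda>j. xs j A) \<longlonglongrightarrow> x A" if "xs \<longlonglongrightarrow> x" for xs :: "nat \<Rightarrow> nat set \<Rightarrow> 'w" and x A
  proof -
    have "\<forall>i. ((\<lambda>c. xs c i) \<longlongrightarrow> x i) sequentially" using iffD1[OF tendsto_fun_iff that] .
    thus ?thesis by blast
  qed
  interpret core Vc T' S re nsq
  proof
    show "(0 :: nat set \<Rightarrow> 'w) \<in> Vc" by (simp add: Vc_def cliff_V_def)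
    show "\<And>x y a. x \<in> Vc \<Longrightarrow> y \<in> Vc \<Longrightarrow> a *\<^sub>R x + y \<in> Vc" by (simp add: Vc_def cliff_V_def)
    show "\<And>x. x \<in> op_dom T' \<Longrightarrow> x \<in> Vc" by (simp add: domT)
    show "0 \<in> op_dom T'" by (auto simp: domT Vc_def cliff_V_def intro!: rco_props(1)[OF Ts])
    show "\<And>x y a. x \<in> op_dom T' \<Longrightarrow> y \<in> op_dom T' \<Longrightarrow> a *\<^sub>R x + y \<in> op_dom T'"
      by (auto simp: domT Vc_def cliff_V_def intro!: rco_props(2)[OF Ts] rco_props(3)[OF Ts])
    show "\<And>x y a. x \<in> op_dom T' \<Longrightarrow> y \<in> op_dom T' \<Longrightarrow>
        op_app T' (a *\<^sub>R x + y) = a *\<^sub>R op_app T' x + op_app T' y"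
      unfolding appT
    proof -
      fix x y a assume x: "x \<in> op_dom T'" and y: "y \<in> op_dom T'"
      show "cliff_act n Tf (a *\<^sub>R x + y) = a *\<^sub>R cliff_act n Tf x + cliff_act n Tf y"
      proof (rule cliff_act_lin[where Dm = "\<lambda>i. op_dom (Ts i)"])
        fix i u w assume "i \<le> n" "u \<in> op_dom (Ts i)" "w \<in> op_dom (Ts i)"
        thus "Tf i (a *\<^sub>R u + w) = a *\<^sub>R Tf i u + Tf i w"
          using rco_props(4)[OF Ts[of i]] by (simp add: Tf_def)
      next
        fix A i assume "i \<le> n" thus "x A \<in> op_dom (Ts i)" using x by (simp add: domT)
      next
        fix A i assume "i \<le> n" thus "y A \<in> op_dom (Ts i)" using y by (simp add: domT)
      qed
    qed
    show "\<And>x. x \<in> op_dom T' \<Longrightarrow> op_app T' x \<in> Vc"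
      by (simp add: appT Vc_def cliff_V_def cliff_act_def)
    show "\<And>v. v \<in> Vc \<Longrightarrow> S v \<in> op_dom (op_pow Vc T' 2)" using Sr domQ by simp
    show "\<And>v. v \<in> Vc \<Longrightarrow> op_app (op_Q Vc T' re nsq) (S v) = v" using Sr by simp
    show "\<And>u. u \<in> op_dom (op_pow Vc T' 2) \<Longrightarrow> S (op_app (op_Q Vc T' re nsq) u) = u" using Sl domQ by simp
    show "\<And>xs x. (\<And>j. xs j \<in> Vc) \<Longrightarrow> xs \<longlonglongrightarrow> x \<Longrightarrow> x \<in> Vc \<Longrightarrow> (\<lambda>j. S (xs j)) \<longlonglongrightarrow> S x"
    proof -
      fix xs x assume xs: "\<And>j. xs j \<in> Vc" and lx: "xs \<longlonglongrightarrow> x" and xV: "x \<in> Vc"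
      have "(\<lambda>j. cliff_act n Ss (xs j) B) \<longlonglongrightarrow> cliff_act n Ss x B" for B
        by (rule cliff_act_lim) (use Ssbl comp[OF lx] bounded_linear.tendsto in blast)
      thus "(\<lambda>j. S (xs j)) \<longlonglongrightarrow> S x" using Seq xs xV by (simp add: tendsto_fun_iff)
    qed
    show "\<And>xs x. (\<And>j. xs j \<in> Vc) \<Longrightarrow> xs \<longlonglongrightarrow> x \<Longrightarrow> x \<in> Vc \<Longrightarrow>
        (\<lambda>j. op_app T' (S (xs j))) \<longlonglongrightarrow> op_app T' (S x)"
    proof -
      fix xs x assume xs: "\<And>j. xs j \<in> Vc" and lx: "xs \<longlonglongrightarrow> x" and xV: "x \<in> Vc"
      have inner: "(\<lambda>j. Tf i (S (xs j) A)) \<longlonglongrightarrow> Tf i (S x A)" if i: "i \<le> n" for i A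
      proof -
        have "(\<lambda>j. cliff_act n (\<lambda>k w. Tf i (Ss k w)) (xs j) A) \<longlonglongrightarrow> cliff_act n (\<lambda>k w. Tf i (Ss k w)) x A"
          by (rule cliff_act_lim) (use Kbl[OF i] comp[OF lx] bounded_linear.tendsto in blast)
        thus ?thesis using stepC[OF i] xs xV by simp
      qed
      have "(\<lambda>j. cliff_act n Tf (S (xs j)) B) \<longlonglongrightarrow> cliff_act n Tf (S x) B" for B
        by (rule cliff_act_lim) (rule inner)
      thus "(\<lambda>j. op_app T' (S (xs j))) \<longlonglongrightarrow> op_app T' (S x)" by (simp add: appT tendsto_fun_iff)
    qed
    show "\<And>xs x. (\<And>j. xs j \<in> Vc) \<Longrightarrow> xs \<longlonglongrightarrow> x \<Longrightarrow> x \<in> Vc"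
    proof -
      fix xs x assume xs: "\<And>j. xs j \<in> Vc" and lx: "xs \<longlonglongrightarrow> x"
      have "x A = 0" if "\<not> A \<subseteq> {1..n}" for A
      proof -
        have "(\<lambda>j. xs j A) = (\<lambda>j. 0)" using xs that by (simp add: Vc_def cliff_V_def)
        hence "(\<lambda>j. 0 :: 'w) \<longlonglongrightarrow> x A" using comp[OF lx, of A] by simp
        thus ?thesis using LIMSEQ_unique tendsto_const by blast
      qed
      thus "x \<in> Vc" by (simp add: Vc_def cliff_V_def)
    qed
    show "\<And>f g (a :: nat set \<Rightarrow> 'w) b. f \<longlonglongrightarrow> a \<Longrightarrow> g \<longlonglongrightarrow> b \<Longrightarrow> (\<lambda>j. f j + g j) \<longlonglongrightarrow> a + b"
      by (simp add: tendsto_fun_iff tendsto_add)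
    show "\<And>f (a :: nat set \<Rightarrow> 'w) c. f \<longlonglongrightarrow> a \<Longrightarrow> (\<lambda>j. c *\<^sub>R f j) \<longlonglongrightarrow> c *\<^sub>R a"
      by (simp add: tendsto_fun_iff tendsto_scaleR)
    show "\<And>f (a :: nat set \<Rightarrow> 'w) b. f \<longlonglongrightarrow> a \<Longrightarrow> f \<longlonglongrightarrow> b \<Longrightarrow> a = b"
    proof -
      fix f and a b :: "nat set \<Rightarrow> 'w" assume "f \<longlonglongrightarrow> a" "f \<longlonglongrightarrow> b"
      hence "a A = b A" for A using comp LIMSEQ_unique by blast
      thus "a = b" by (rule ext)
    qed
  qed
  define G where "G = {(x, op_app (op_poly Vc T' P) x) | x. x \<in> op_dom (op_poly Vc T' P)}"
  have appP: "op_app (op_poly Vc T' P) = evN (degree P) P"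
    by (simp add: op_poly_def evN_def fun_eq_iff)
  have domP: "op_dom (op_poly Vc T' P) = op_dom (op_pow Vc T' (degree P))" by (simp add: op_poly_def)
  have GV: "G \<subseteq> Vc \<times> Vc"
    unfolding G_def appP domP using D_sub evN_Vc by blast
  have VcC: "closed Vc" unfolding Vc_def by (rule cliff_V_closed)
  have "closure G \<subseteq> G"
  proof
    fix p assume pc: "p \<in> closure G"
    obtain a b where pab: "p = (a, b)" by (cases p)
    have "closure G \<subseteq> Vc \<times> Vc" using GV closed_Times[OF VcC VcC] by (simp add: closure_minimal)
    hence aV: "a \<in> Vc" and bV: "b \<in> Vc" using pc pab by auto
    define e where "e j = inverse (real (Suc j))" for j
    have epos: "e j > 0" for j by (simp add: e_def)
    define U where "U j = {u :: nat set \<Rightarrow> 'w. \<forall>A\<in>Pow {1..n}. u A \<in> ball (a A) (e j)} \<times>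
                        {w :: nat set \<Rightarrow> 'w. \<forall>A\<in>Pow {1..n}. w A \<in> ball (b A) (e j)}" for j
    have ob: "open {u :: nat set \<Rightarrow> 'w. \<forall>A\<in>Pow {1..n}. u A \<in> ball (c A) r}" for c :: "nat set \<Rightarrow> 'w" and r
      using product_topology_basis'[where I = "Pow {1..n}" and U = "\<lambda>A. ball (c A) r" and x = "\<lambda>A::nat set. A"]
      by simp
    have Uo: "open (U j)" for j
      unfolding U_def by (intro open_Times ob)
    have abU: "(a, b) \<in> U j" for j using epos by (simp add: U_def)
    have "U j \<inter> G \<noteq> {}" for j
    proof
      assume "U j \<inter> G = {}"
      hence "U j \<inter> closure G = {}" using open_Int_closure_eq_empty[OF Uo] by blast
      thus False using abU pc pab by blast
    qed
    hence "\<forall>j. \<exists>q. q \<in> U j \<inter> G" by blast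
    then obtain f where f: "\<And>j. f j \<in> U j \<inter> G" by metis
    have fG: "f j \<in> G" for j using f by blast
    have fV1: "fst (f j) \<in> Vc" for j using fG[of j] GV by (auto simp: mem_Times_iff)
    have fV2: "snd (f j) \<in> Vc" for j using fG[of j] GV by (auto simp: mem_Times_iff)
    have e0: "e \<longlonglongrightarrow> 0" unfolding e_def by (rule LIMSEQ_inverse_real_of_nat)
    have complim: "(\<lambda>j. g j A) \<longlonglongrightarrow> c A"
      if gV: "\<And>j. g j \<in> Vc" and cV: "c \<in> Vc" and gd: "\<And>j A. A \<subseteq> {1..n} \<Longrightarrow> dist (g j A) (c A) < e j"
      for g :: "nat \<Rightarrow> nat set \<Rightarrow> 'w" and c A
    proof (cases "A \<subseteq> {1..n}")
      case True
      have "(\<lambda>j. dist (g j A) (c A)) \<longlonglongrightarrow> 0"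
        by (rule Lim_null_comparison[OF _ e0]) (use gd[OF True] in \<open>auto intro!: always_eventually less_imp_le\<close>)
      thus ?thesis by (rule tendsto_dist_iff[THEN iffD2])
    next
      case False
      have "g j A = 0" for j using gV[of j] False by (simp add: Vc_def cliff_V_def)
      moreover have "c A = 0" using cV False by (simp add: Vc_def cliff_V_def)
      ultimately show ?thesis by simp
    qed
    have la: "(\<lambda>j. fst (f j)) \<longlonglongrightarrow> a"
    proof -
      have "(\<lambda>j. fst (f j) A) \<longlonglongrightarrow> a A" for A
      proof (rule complim[OF fV1 aV])
        fix j A assume "A \<subseteq> {1..n}"
        thus "dist (fst (f j) A) (a A) < e j" using f[of j] by (auto simp: U_def dist_commute)
      qed
      thus ?thesis by (simp add: tendsto_fun_iff)
    qed
    have lb: "(\<lambda>j. snd (f j)) \<longlonglongrightarrow> b"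
    proof -
      have "(\<lambda>j. snd (f j) A) \<longlonglongrightarrow> b A" for A
      proof (rule complim[OF fV2 bV])
        fix j A assume "A \<subseteq> {1..n}"
        thus "dist (snd (f j) A) (b A) < e j" using f[of j] by (auto simp: U_def dist_commute)
      qed
      thus ?thesis by (simp add: tendsto_fun_iff)
    qed
    have "(a, b) \<in> G" unfolding G_def by (rule poly_graph_closed_seq[OF fG[unfolded G_def] la lb])
    thus "p \<in> G" using pab by simp
  qed
  hence "closed G" by (simp add: closure_subset_eq)
  thus ?thesis unfolding op_closed_def G_def Vc_def .
qed


theorem mainTheorem11:
  fixes L :: "quat \<Rightarrow> 'v::banach \<Rightarrow> 'v" and R :: "'v \<Rightarrow> quat \<Rightarrow> 'v"
    and T :: "'v op" and n :: nat and T' :: "(nat set \<Rightarrow> 'w::banach) op"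
    and P :: "real poly"
  shows "(two_sided_qbanach L R \<and> qK R T \<and> q_rhoS R T \<noteq> {}
            \<longrightarrow> op_closed (op_poly UNIV T P))
       \<and> (cK n T' \<and> c_rhoS n T' \<noteq> {}
            \<longrightarrow> op_closed (op_poly (cliff_V n) T' P))"
proof (intro conjI impI)
  assume A: "two_sided_qbanach L R \<and> qK R T \<and> q_rhoS R T \<noteq> {}"
  show "op_closed (op_poly UNIV T P)"
    by (rule quat_case[of L R T P]) (use A in simp_all)
next
  assume B: "cK n T' \<and> c_rhoS n T' \<noteq> {}"
  show "op_closed (op_poly (cliff_V n) T' P)"
    by (rule cliff_case[of n T' P]) (use B in simp_all)
qed

end
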